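(* Let $\bar x\in M$ be a nondegenerate T-stationary point of MPOC. Then $\bar x$ is a local minimizer of MPOC if and only if its T-index vanishes, i.e. if and only if $a_{00}(\bar x)=\emptyset$ and $D^2L(\bar x)|_{T_{\bar x}M(\bar x)}$ has no negative eigenvalues.
   Context: MPOC: minimize $f(x)$ subject to $x\in M=\{x\in\mathbb{R}^n \mid h_i(x)=0,\ i\in I;\ g_j(x)\ge 0,\ j\in J;\ F_{1,m}(x)F_{2,m}(x)=0,\ F_{2,m}(x)\ge 0,\ m=1,\dots,k\}$, all functions $C^2$, $I,J$ finite. Index sets at $\bar x\in M$: $J_0(\bar x)=\{j\mid g_j(\bar x)=0\}$, $a_{00}(\bar x)=\{m\mid F_{1,m}(\bar x)=0=F_{2,m}(\bar x)\}$, $a_{01}(\bar x)=\{m\mid F_{1,m}(\bar x)=0,F_{2,m}(\bar x)>0\}$, $a_{10}(\bar x)=\{m\mid F_{1,m}(\bar x)\ne0,F_{2,m}(\bar x)=0\}$. LICQ at $\bar x$: $Dh_i(\bar x)$ ($i\in I$), $Dg_j(\bar x)$ ($j\in J_0(\bar x)$), $DF_{1,m}(\bar x)$ ($m\in a_{01}\cup a_{00}$), $DF_{2,m}(\bar x)$ ($m\in a_{10}\cup a_{00}$) linearly independent. T-stationary point: $\bar x\in M$ with multipliers $\bar\lambda_i,\bar\mu_j$ ($j\in J_0(\bar x)$), $\bar\sigma_{1,m}$ ($m\in a_{01}$), $\bar\sigma_{2,m}$ ($m\in a_{10}$), $\bar\varrho_{1,m},\bar\varrho_{2,m}$ ($m\in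 a_{00}$) such that $Df(\bar x)=\sum_{I}\bar\lambda_iDh_i+\sum_{J_0}\bar\mu_jDg_j+\sum_{a_{01}}\bar\sigma_{1,m}DF_{1,m}+\sum_{a_{10}}\bar\sigma_{2,m}DF_{2,m}+\sum_{a_{00}}(\bar\varrho_{1,m}DF_{1,m}+\bar\varrho_{2,m}DF_{2,m})$ (at $\bar x$), $\bar\mu_j\ge0$, and $\bar\varrho_{1,m}=0$ or $\bar\varrho_{2,m}\le0$ for each $m\in a_{00}(\bar x)$. Lagrange function $L(x)=f(x)-\sum_{I}\bar\lambda_ih_i(x)-\sum_{J_0(\bar x)}\bar\mu_jg_j(x)-\sum_{a_{01}}\bar\sigma_{1,m}F_{1,m}(x)-\sum_{a_{10}}\bar\sigma_{2,m}F_{2,m}(x)-\sum_{a_{00}}(\bar\varrho_{1,m}F_{1,m}(x)+\bar\varrho_{2,m}F_{2,m}(x))$; $T_{\bar x}M(\bar x)=\{\xi\mid Dh_i(\bar x)\xi=0,\ Dg_j(\bar x)\xi=0\ (j\in J_0),\ DF_{1,m}(\bar x)\xi=0\ (m\in a_{01}\cup a_{00}),\ DF_{2,m}(\bar x)\xi=0\ (m\in a_{10}\cup a_{00})\}$. Nondegenerate: ND1 LICQ at $\bar x$; ND2 $\bar\mu_j>0$ for all $j\in J_0(\bar x)$; ND3 $\bar\varrho_{1,m}\ne0$ and $\bar\varrho_{2,m}<0$ for all $m\in a_{00}(\bar x)$; ND4 $D^2L(\bar x)|_{T_{\bar x}M(\bar x)}$ nonsingular. T-index: $TI=QI+BI$,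 where $QI$ is the number of negative eigenvalues of $D^2L(\bar x)|_{T_{\bar x}M(\bar x)}$ and $BI$ is the number of negative $\bar\varrho_{2,m}$, $m\in a_{00}(\bar x)$ (which equals $|a_{00}(\bar x)|$ under ND3). *)

theory Defs
  imports "HOL-Analysis.Analysis"
begin

text \<open>C^2 with explicitly named first and second Frechet derivatives.
  f' x is Df(x) (a bounded linear functional), f'' x is D^2 f(x)
  (a bounded bilinear form, curried).\<close>
definition C2_with ::
  "('a::euclidean_space \<Rightarrow> real) \<Rightarrow> ('a \<Rightarrow> ('a \<Rightarrow>\<^sub>L real))
     \<Rightarrow> ('a \<Rightarrow> ('a \<Rightarrow>\<^sub>L ('a \<Rightarrow>\<^sub>L real))) \<Rightarrow> bool" where
  "C2_with f f' f'' \<longleftrightarrow>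
     (\<forall>x. (f has_derivative blinfun_apply (f' x)) (at x)) \<and>
     (\<forall>x. (f' has_derivative blinfun_apply (f'' x)) (at x)) \<and>
     continuous_on UNIV f''"

definition D2 :: "('a::real_normed_vector \<Rightarrow>\<^sub>L ('a \<Rightarrow>\<^sub>L real)) \<Rightarrow> 'a \<Rightarrow> 'a \<Rightarrow> real" where
  "D2 A \<xi> \<eta> = blinfun_apply (blinfun_apply A \<xi>) \<eta>"

definition feasible_set ::
  "'i set \<Rightarrow> ('i \<Rightarrow> 'a \<Rightarrow> real) \<Rightarrow> 'j set \<Rightarrow> ('j \<Rightarrow> 'a \<Rightarrow> real) \<Rightarrow> nat
     \<Rightarrow> (nat \<Rightarrow> 'a \<Rightarrow> real) \<Rightarrow> (nat \<Rightarrow> 'a \<Rightarrow> real) \<Rightarrow> 'a set" where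
  "feasible_set I h J g k F1 F2 =
     {x. (\<forall>i\<in>I. h i x = 0) \<and> (\<forall>j\<in>J. g j x \<ge> 0) \<and>
         (\<forall>m\<in>{1..k}. F1 m x * F2 m x = 0 \<and> F2 m x \<ge> 0)}"

definition J0 :: "'j set \<Rightarrow> ('j \<Rightarrow> 'a \<Rightarrow> real) \<Rightarrow> 'a \<Rightarrow> 'j set" where
  "J0 J g x = {j\<in>J. g j x = 0}"

definition a00 :: "nat \<Rightarrow> (nat \<Rightarrow> 'a \<Rightarrow> real) \<Rightarrow> (nat \<Rightarrow> 'a \<Rightarrow> real) \<Rightarrow> 'a \<Rightarrow> nat set" where
  "a00 k F1 F2 x = {m\<in>{1..k}. F1 m x = 0 \<and> F2 m x = 0}"

definition a01 :: "nat \<Rightarrow> (nat \<Rightarrow> 'a \<Rightarrow> real) \<Rightarrow> (nat \<Rightarrow> 'a \<Rightarrow> real) \<Rightarrow> 'a \<Rightarrow> nat set" where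
  "a01 k F1 F2 x = {m\<in>{1..k}. F1 m x = 0 \<and> F2 m x > 0}"

definition a10 :: "nat \<Rightarrow> (nat \<Rightarrow> 'a \<Rightarrow> real) \<Rightarrow> (nat \<Rightarrow> 'a \<Rightarrow> real) \<Rightarrow> 'a \<Rightarrow> nat set" where
  "a10 k F1 F2 x = {m\<in>{1..k}. F1 m x \<noteq> 0 \<and> F2 m x = 0}"

definition local_minimizer :: "('a::metric_space \<Rightarrow> real) \<Rightarrow> 'a set \<Rightarrow> 'a \<Rightarrow> bool" where
  "local_minimizer f M x \<longleftrightarrow> x \<in> M \<and> (\<exists>\<epsilon>>0. \<forall>y\<in>M. dist y x < \<epsilon> \<longrightarrow> f x \<le> f y)"

text \<open>Restriction of a (symmetric) bilinear form B to a linear subspace T: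
  the self-adjoint operator A on T with inner (A xi) eta = B xi eta for xi, eta in T.\<close>
definition restr_eigenspace :: "('a::real_inner \<Rightarrow> 'a \<Rightarrow> real) \<Rightarrow> 'a set \<Rightarrow> real \<Rightarrow> 'a set" where
  "restr_eigenspace B T l = {\<xi>\<in>T. \<forall>\<eta>\<in>T. B \<xi> \<eta> = l * (\<xi> \<bullet> \<eta>)}"

definition restr_eigenvalue :: "('a::real_inner \<Rightarrow> 'a \<Rightarrow> real) \<Rightarrow> 'a set \<Rightarrow> real \<Rightarrow> bool" where
  "restr_eigenvalue B T l \<longleftrightarrow> (\<exists>\<xi>\<in>restr_eigenspace B T l. \<xi> \<noteq> 0)"

definition restr_nonsingular :: "('a::real_inner \<Rightarrow> 'a \<Rightarrow> real) \<Rightarrow> 'a set \<Rightarrow> bool" where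
  "restr_nonsingular B T \<longleftrightarrow> (\<forall>\<xi>\<in>T. (\<forall>\<eta>\<in>T. B \<xi> \<eta> = 0) \<longrightarrow> \<xi> = 0)"

definition neg_eig_count :: "('a::euclidean_space \<Rightarrow> 'a \<Rightarrow> real) \<Rightarrow> 'a set \<Rightarrow> nat" where
  "neg_eig_count B T =
     (\<Sum>l\<in>{l. l < 0 \<and> restr_eigenvalue B T l}. dim (restr_eigenspace B T l))"

end

theory Submission
  imports Defs
begin


lemma C2D: assumes "C2_with f f' f''"
  shows "(f has_derivative blinfun_apply (f' x)) (at x)"
    "(f' has_derivative blinfun_apply (f'' x)) (at x)"
    "continuous_on UNIV f''"
  using assms unfolding C2_with_def by auto

lemma line_deriv1:
  assumes "C2_with f f' f''"
  shows "((\<lambda>t. f (x + t *\<^sub>R w)) has_real_derivative (f' (x + t *\<^sub>R w) w)) (at t)"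
proof -
  have "((\<lambda>t. x + t *\<^sub>R w) has_derivative (\<lambda>h. h *\<^sub>R w)) (at t)"
    by (auto intro!: derivative_eq_intros)
  from has_derivative_compose[OF this C2D(1)[OF assms]]
  have "((\<lambda>t. f (x + t *\<^sub>R w)) has_derivative (\<lambda>h. f' (x + t *\<^sub>R w) (h *\<^sub>R w))) (at t)" 
    by (simp add: o_def)
  then show ?thesis unfolding has_field_derivative_def
    by (rule has_derivative_eq_rhs) (auto simp: blinfun.scaleR_right)
qed

lemma line_deriv2:
  assumes "C2_with f f' f''"
  shows "((\<lambda>t. f' (x + t *\<^sub>R w) v) has_real_derivative (D2 (f'' (x + t *\<^sub>R w)) w v)) (at t)"
proof -
  have "((\<lambda>t. x + t *\<^sub>R w) has_derivative (\<lambda>h. h *\<^sub>R w)) (at t)"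
    by (auto intro!: derivative_eq_intros)
  from has_derivative_compose[OF this C2D(2)[OF assms]]
  have 1: "((\<lambda>t. f' (x + t *\<^sub>R w)) has_derivative (\<lambda>h. f'' (x + t *\<^sub>R w) (h *\<^sub>R w))) (at t)" 
    by (simp add: o_def)
  have "((\<lambda>t. f' (x + t *\<^sub>R w) v) has_derivative (\<lambda>h. f'' (x + t *\<^sub>R w) (h *\<^sub>R w) v)) (at t)"
    using bounded_linear.has_derivative[OF blinfun.bounded_linear_left 1] .
  then show ?thesis unfolding has_field_derivative_def
    by (rule has_derivative_eq_rhs) (auto simp: blinfun.scaleR_right blinfun.scaleR_left D2_def)
qed
lemma D2_bound: "\<bar>D2 A u v\<bar> \<le> norm A * norm u * norm v"
proof -
  have "\<bar>D2 A u v\<bar> \<le> norm (blinfun_apply A u) * norm v"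
    unfolding D2_def using norm_blinfun[of "blinfun_apply A u" v] by simp
  also have "\<dots> \<le> norm A * norm u * norm v"
    by (intro mult_right_mono norm_blinfun) auto
  finally show ?thesis .
qed

lemma D2_diff: "D2 (A - B) u v = D2 A u v - D2 B u v"
  by (simp add: D2_def blinfun.diff_left)

lemma taylor2:
  assumes "C2_with f f' f''"
  shows "\<exists>s. 0 < s \<and> s < 1 \<and> f (x + w) = f x + f' x w + D2 (f'' (x + s *\<^sub>R w)) w w / 2"
proof -
  define diff where "diff = (\<lambda>m::nat. if m = 0 then (\<lambda>t. f (x + t *\<^sub>R w))
     else if m = 1 then (\<lambda>t. f' (x + t *\<^sub>R w) w) else (\<lambda>t. D2 (f'' (x + t *\<^sub>R w)) w w))"
  have "\<exists>t::real. 0 < t \<and> t < 1 \<and>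
      diff 0 1 = sum (\<lambda>m. (diff m 0 / fact m) * 1 ^ m) {..<2} + (diff 2 t / fact 2) * 1 ^ 2"
  proof (rule Maclaurin)
    show "\<forall>m t. m < 2 \<and> 0 \<le> t \<and> t \<le> 1 \<longrightarrow> DERIV (diff m) t :> diff (Suc m) t"
    proof (intro allI impI)
      fix m t assume "m < (2::nat) \<and> 0 \<le> t \<and> t \<le> (1::real)"
      then have "m = 0 \<or> m = 1" by auto
      then show "DERIV (diff m) t :> diff (Suc m) t"
        using line_deriv1[OF assms, of x w t] line_deriv2[OF assms, of x w w t]
        by (auto simp: diff_def)
    qed
  qed auto
  then obtain t where "0 < t" "t < 1" 
    "diff 0 1 = sum (\<lambda>m. (diff m 0 / fact m) * 1 ^ m) {..<2} + (diff 2 t / fact 2) * 1 ^ 2"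
    by blast
  then show ?thesis
    by (intro exI[of _ t]) (simp add: diff_def numeral_2_eq_2 lessThan_Suc)
qed

lemma taylor_small:
  assumes "C2_with f f' f''" "e > 0"
  shows "\<exists>d>0. \<forall>y. norm (y - x) < d \<longrightarrow>
     \<bar>f y - f x - f' x (y - x) - D2 (f'' x) (y - x) (y - x) / 2\<bar> \<le> e * norm (y - x) ^ 2"
proof -
  have "isCont f'' x" using C2D(3)[OF assms(1)] by (simp add: continuous_on_eq_continuous_at)
  then obtain d where d: "d > 0" "\<And>z. dist z x < d \<Longrightarrow> dist (f'' z) (f'' x) < 2 * e"
    using assms(2) unfolding continuous_at_eps_delta by (metis mult_pos_pos zero_less_numeral)
  show ?thesis
  proof (intro exI[of _ d] conjI allI impI)
    fix y assume y: "norm (y - x) < d"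
    define w where "w = y - x"
    obtain s where s: "0 < s" "s < 1" "f (x + w) = f x + f' x w + D2 (f'' (x + s *\<^sub>R w)) w w / 2"
      using taylor2[OF assms(1)] by blast
    have "dist (x + s *\<^sub>R w) x < d"
      using s y by (simp add: dist_norm w_def) (smt (verit) mult_left_le_one_le norm_ge_zero)
    then have "dist (f'' (x + s *\<^sub>R w)) (f'' x) < 2 * e" using d(2) by blast
    then have nd: "norm (f'' (x + s *\<^sub>R w) - f'' x) \<le> 2 * e"
      by (simp add: dist_norm)
    have "\<bar>D2 (f'' (x + s *\<^sub>R w)) w w - D2 (f'' x) w w\<bar> \<le> 2 * e * norm w * norm w"
      using D2_bound[of "f'' (x + s *\<^sub>R w) - f'' x" w w] nd
      by (simp add: D2_diff) (smt (verit, best) mult_right_mono norm_ge_zero zero_le_mult_iff)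
    then show "\<bar>f y - f x - f' x (y - x) - D2 (f'' x) (y - x) (y - x) / 2\<bar> \<le> e * norm (y - x) ^ 2"
      using s(3) by (simp add: w_def power2_eq_square) 
  qed (use d in auto)
qed

lemma schwarz_aux:
  assumes "C2_with f f' f''" "t > 0"
  shows "\<exists>z. norm (z - x) \<le> t * (norm u + norm v) \<and>
    f (x + t *\<^sub>R u + t *\<^sub>R v) - f (x + t *\<^sub>R u) - f (x + t *\<^sub>R v) + f x = t^2 * D2 (f'' z) v u"
proof -
  have "\<exists>s. 0 < s \<and> s < t \<and> (\<lambda>s. f ((x + t *\<^sub>R v) + s *\<^sub>R u) - f (x + s *\<^sub>R u)) t
      - (\<lambda>s. f ((x + t *\<^sub>R v) + s *\<^sub>R u) - f (x + s *\<^sub>R u)) 0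
      = (t - 0) * (f' ((x + t *\<^sub>R v) + s *\<^sub>R u) u - f' (x + s *\<^sub>R u) u)"
    by (rule MVT2) (use assms in \<open>auto intro!: derivative_eq_intros line_deriv1[OF assms(1)]\<close>)
  then obtain s where s: "0 < s" "s < t" "f (x + t *\<^sub>R v + t *\<^sub>R u) - f (x + t *\<^sub>R u) - (f (x + t *\<^sub>R v) - f x)
      = t * (f' ((x + s *\<^sub>R u) + t *\<^sub>R v) u - f' (x + s *\<^sub>R u) u)"
    by (auto simp: algebra_simps)
  have "\<exists>r. 0 < r \<and> r < t \<and> (\<lambda>r. f' ((x + s *\<^sub>R u) + r *\<^sub>R v) u) t - (\<lambda>r. f' ((x + s *\<^sub>R u) + r *\<^sub>R v) u) 0
      = (t - 0) * D2 (f'' ((x + s *\<^sub>R u) + r *\<^sub>R v)) v u"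
    by (rule MVT2) (use assms in \<open>auto intro!: line_deriv2[OF assms(1)]\<close>)
  then obtain r where r: "0 < r" "r < t" "f' ((x + s *\<^sub>R u) + t *\<^sub>R v) u - f' (x + s *\<^sub>R u) u
      = t * D2 (f'' ((x + s *\<^sub>R u) + r *\<^sub>R v)) v u"
    by auto
  show ?thesis
  proof (intro exI conjI)
    have "norm (s *\<^sub>R u + r *\<^sub>R v) \<le> s * norm u + r * norm v"
      using s r by (smt (verit) norm_scaleR norm_triangle_ineq abs_of_pos)
    also have "\<dots> \<le> t * norm u + t * norm v"
      using s r by (intro add_mono mult_right_mono) auto
    finally show "norm ((x + s *\<^sub>R u) + r *\<^sub>R v - x) \<le> t * (norm u + norm v)"
      by (simp add: algebra_simps)
    show "f (x + t *\<^sub>R u + t *\<^sub>R v) - f (x + t *\<^sub>R u) - f (x + t *\<^sub>R v) + f x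
      = t^2 * D2 (f'' ((x + s *\<^sub>R u) + r *\<^sub>R v)) v u"
      using s(3) r(3) by (simp add: algebra_simps power2_eq_square)
  qed
qed

lemma D2_sym:
  assumes "C2_with f f' f''"
  shows "D2 (f'' x) u v = D2 (f'' x) v u"
proof (rule ccontr)
  assume ne: "D2 (f'' x) u v \<noteq> D2 (f'' x) v u"
  define e where "e = \<bar>D2 (f'' x) u v - D2 (f'' x) v u\<bar> / (4 * (norm u * norm v + 1))"
  have e: "e > 0" using ne unfolding e_def
    by (intro divide_pos_pos) (auto intro!: add_nonneg_pos)
  have "isCont f'' x" using C2D(3)[OF assms(1)] by (simp add: continuous_on_eq_continuous_at)
  then obtain d where d: "d > 0" "\<And>z. dist z x < d \<Longrightarrow> dist (f'' z) (f'' x) < e"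
    using e unfolding continuous_at_eps_delta by blast
  define t where "t = d / (2 * (norm u + norm v + 1))"
  have t: "t > 0" using d unfolding t_def by (auto intro!: divide_pos_pos add_nonneg_pos)
  have td: "t * (norm u + norm v) < d"
  proof -
    have "t * (norm u + norm v) \<le> t * (norm u + norm v + 1)" using t by auto
    also have "\<dots> = d / 2"
    proof -
      have gen: "\<And>q::real. q > 0 \<Longrightarrow> d / (2*q) * q = d/2" by (simp add: field_simps)
      show ?thesis unfolding t_def by (rule gen) (simp add: add_nonneg_pos)
    qed
    finally show ?thesis using d by auto
  qed
  obtain z where z: "norm (z - x) \<le> t * (norm u + norm v)"
    "f (x + t *\<^sub>R u + t *\<^sub>R v) - f (x + t *\<^sub>R u) - f (x + t *\<^sub>R v) + f x = t^2 * D2 (f'' z) v u"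
    using schwarz_aux[OF assms t, of x u v] by blast
  obtain z' where z': "norm (z' - x) \<le> t * (norm v + norm u)"
    "f (x + t *\<^sub>R v + t *\<^sub>R u) - f (x + t *\<^sub>R v) - f (x + t *\<^sub>R u) + f x = t^2 * D2 (f'' z') u v"
    using schwarz_aux[OF assms t, of x v u] by blast
  have eq: "D2 (f'' z) v u = D2 (f'' z') u v"
    using z(2) z'(2) t by (simp add: algebra_simps)
  have nz: "norm (f'' z - f'' x) < e" using d(2)[of z] z(1) td by (simp add: dist_norm)
  have nz': "norm (f'' z' - f'' x) < e" using d(2)[of z'] z'(1) td by (simp add: dist_norm add.commute)
  have b1: "\<bar>D2 (f'' z) v u - D2 (f'' x) v u\<bar> \<le> e * (norm u * norm v)"
    using D2_bound[of "f'' z - f'' x" v u] nz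
    by (simp add: D2_diff) (smt (verit, best) mult_right_mono norm_ge_zero zero_le_mult_iff mult.commute mult.assoc)
  have b2: "\<bar>D2 (f'' z') u v - D2 (f'' x) u v\<bar> \<le> e * (norm u * norm v)"
    using D2_bound[of "f'' z' - f'' x" u v] nz'
    by (simp add: D2_diff) (smt (verit, best) mult_right_mono norm_ge_zero zero_le_mult_iff mult.commute mult.assoc)
  have "\<bar>D2 (f'' x) u v - D2 (f'' x) v u\<bar> \<le> 2 * e * (norm u * norm v)"
    using b1 b2 eq by linarith
  also have "\<dots> < 4 * e * (norm u * norm v + 1)"
  proof -
    have "0 \<le> e * (norm u * norm v)" using e by simp
    moreover have "4 * e * (norm u * norm v + 1) = 4 * (e*(norm u*norm v)) + 4*e"
      "2 * e * (norm u * norm v) = 2*(e*(norm u * norm v))" by (simp_all add: algebra_simps)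
    ultimately show ?thesis using e by linarith
  qed
  also have "\<dots> = \<bar>D2 (f'' x) u v - D2 (f'' x) v u\<bar>"
  proof -
    have gen: "\<And>q a::real. q > 0 \<Longrightarrow> 4 * (a / (4 * q)) * q = a" by (simp add: field_simps)
    show ?thesis unfolding e_def by (rule gen) (simp add: add_nonneg_pos)
  qed
  finally show False by simp
qed



lemma D2_add_left: "D2 A (x + y) z = D2 A x z + D2 A y z"
  by (simp add: D2_def blinfun.add_left blinfun.add_right)
lemma D2_add_right: "D2 A z (x + y) = D2 A z x + D2 A z y"
  by (simp add: D2_def blinfun.add_left blinfun.add_right)
lemma D2_scale_left: "D2 A (c *\<^sub>R x) z = c * D2 A x z"
  by (simp add: D2_def blinfun.scaleR_left blinfun.scaleR_right)
lemma D2_scale_right: "D2 A z (c *\<^sub>R x) = c * D2 A z x"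
  by (simp add: D2_def blinfun.scaleR_left blinfun.scaleR_right)
lemma D2_Aadd: "D2 (A + B) x y = D2 A x y + D2 B x y"
  by (simp add: D2_def plus_blinfun.rep_eq)
lemma D2_Ascale: "D2 (c *\<^sub>R A) x y = c * D2 A x y"
  by (simp add: D2_def scaleR_blinfun.rep_eq)
lemma D2_Asum: "D2 (\<Sum>i\<in>S. A i) x y = (\<Sum>i\<in>S. D2 (A i) x y)"
  by (induction S rule: infinite_finite_induct) (auto simp: D2_def zero_blinfun.rep_eq plus_blinfun.rep_eq)

lemma D2_cont: "continuous_on S (\<lambda>x. D2 A x x)"
  unfolding D2_def by (auto intro!: continuous_intros)

lemma neg_dir_eigen:
  fixes A :: "'a::euclidean_space \<Rightarrow>\<^sub>L ('a \<Rightarrow>\<^sub>L real)"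
  assumes sym: "\<And>u v. D2 A u v = D2 A v u" and T: "subspace T"
    and xi: "\<xi> \<in> T" "\<xi> \<noteq> 0" "D2 A \<xi> \<xi> \<le> 0"
  shows "\<exists>l\<le>0. restr_eigenvalue (D2 A) T l"
proof -
  let ?S = "T \<inter> sphere 0 1"
  have cpt: "compact ?S" by (intro closed_Int_compact closed_subspace T compact_sphere)
  have xin: "\<xi> /\<^sub>R norm \<xi> \<in> ?S" using xi T by (simp add: subspace_scale)
  then obtain e where e: "e \<in> ?S" "\<And>y. y \<in> ?S \<Longrightarrow> D2 A e e \<le> D2 A y y"
    using continuous_attains_inf[OF cpt _ D2_cont[of ?S A]] by blast
  define l where "l = D2 A e e"
  have "D2 A (\<xi> /\<^sub>R norm \<xi>) (\<xi> /\<^sub>R norm \<xi>) \<le> 0"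
    using xi by (simp add: D2_scale_left D2_scale_right mult_nonneg_nonpos)
  then have l0: "l \<le> 0" using e(2)[OF xin] unfolding l_def by linarith
  have ee: "e \<bullet> e = 1" using e(1) by (simp add: dot_square_norm)
  have key: "D2 A (e + t *\<^sub>R \<eta>) (e + t *\<^sub>R \<eta>) \<ge> l * ((e + t *\<^sub>R \<eta>) \<bullet> (e + t *\<^sub>R \<eta>))"
    if "\<eta> \<in> T" for \<eta> t
  proof (cases "e + t *\<^sub>R \<eta> = 0")
    case True then show ?thesis by (simp add: D2_def)
  next
    case False
    define y where "y = e + t *\<^sub>R \<eta>"
    have "y \<in> T" using e(1) that T unfolding y_def by (simp add: subspace_add subspace_scale)
    then have "y /\<^sub>R norm y \<in> ?S" using False y_def T by (simp add: subspace_scale)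
    from e(2)[OF this] have "l \<le> D2 A y y / (norm y)^2"
      unfolding l_def by (simp add: D2_scale_left D2_scale_right power2_eq_square field_simps)
    then have "l * (norm y)^2 \<le> D2 A y y" using False y_def by (simp add: field_simps)
    then show ?thesis by (simp add: y_def dot_square_norm)
  qed
  have "e \<in> restr_eigenspace (D2 A) T l"
    unfolding restr_eigenspace_def
  proof (intro CollectI conjI ballI)
    show "e \<in> T" using e(1) by simp
    fix \<eta> assume eta: "\<eta> \<in> T"
    define c where "c = D2 A e \<eta> - l * (e \<bullet> \<eta>)"
    define D where "D = D2 A \<eta> \<eta> - l * (\<eta> \<bullet> \<eta>)"
    have q: "0 \<le> 2 * t * c + t^2 * D" for t
    proof -
      have "D2 A (e + t *\<^sub>R \<eta>) (e + t *\<^sub>R \<eta>) = l + 2 * t * D2 A e \<eta> + t^2 * D2 A \<eta> \<eta>"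
        using sym[of \<eta> e] by (simp add: D2_add_left D2_add_right D2_scale_left D2_scale_right l_def power2_eq_square algebra_simps)
      moreover have "(e + t *\<^sub>R \<eta>) \<bullet> (e + t *\<^sub>R \<eta>) = 1 + 2 * t * (e \<bullet> \<eta>) + t^2 * (\<eta> \<bullet> \<eta>)"
        using ee by (simp add: inner_add_left inner_add_right inner_commute power2_eq_square algebra_simps)
      ultimately show ?thesis using key[OF eta, of t] unfolding c_def D_def by (simp add: algebra_simps)
    qed
    show "D2 A e \<eta> = l * (e \<bullet> \<eta>)"
    proof (rule ccontr)
      assume "D2 A e \<eta> \<noteq> l * (e \<bullet> \<eta>)"
      then have c0: "c \<noteq> 0" unfolding c_def by simp
      define M where "M = \<bar>D\<bar> + 1"
      have M: "M > 0" "D \<le> M" unfolding M_def by auto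
      have "0 \<le> 2 * (- c / M) * c + (- c / M)^2 * D" using q .
      also have "\<dots> \<le> 2 * (- c / M) * c + (- c / M)^2 * M"
        using M by (intro add_left_mono mult_left_mono) auto
      also have "\<dots> = - (c^2 / M)" using M by (simp add: field_simps power2_eq_square)
      also have "\<dots> < 0" using c0 M by simp
      finally show False by simp
    qed
  qed
  moreover have "e \<noteq> 0" using e(1) by auto
  ultimately show ?thesis using l0 unfolding restr_eigenvalue_def by blast
qed

lemma eigen_finite:
  fixes B :: "'a::euclidean_space \<Rightarrow> 'a \<Rightarrow> real"
  assumes sym: "\<And>u v. B u v = B v u"
  shows "finite {l. restr_eigenvalue B T l}"
proof -
  let ?L = "{l. restr_eigenvalue B T l}"
  define v where "v l = (SOME x. x \<in> restr_eigenspace B T l \<and> x \<noteq> 0)" for l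
  have v: "v l \<in> restr_eigenspace B T l" "v l \<noteq> 0" if "l \<in> ?L" for l
    using that unfolding restr_eigenvalue_def v_def by (metis (mono_tags, lifting) someI_ex mem_Collect_eq)+
  have vT: "v l \<in> T" if "l \<in> ?L" for l using v[OF that] unfolding restr_eigenspace_def by auto
  have ev: "B (v l) \<eta> = l * (v l \<bullet> \<eta>)" if "l \<in> ?L" "\<eta> \<in> T" for l \<eta>
    using v[OF that(1)] that(2) unfolding restr_eigenspace_def by auto
  have orth: "v l \<bullet> v l' = 0" if "l \<in> ?L" "l' \<in> ?L" "l \<noteq> l'" for l l'
  proof -
    have "l * (v l \<bullet> v l') = B (v l) (v l')" using ev[OF that(1) vT[OF that(2)]] by simp
    also have "\<dots> = B (v l') (v l)" by (rule sym)
    also have "\<dots> = l' * (v l \<bullet> v l')" using ev[OF that(2) vT[OF that(1)]] by (simp add: inner_commute)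
    finally show ?thesis using that(3) by simp
  qed
  have inj: "inj_on v ?L"
  proof (rule inj_onI)
    fix l l' assume "l \<in> ?L" "l' \<in> ?L" "v l = v l'"
    then show "l = l'" using orth[of l l'] v by force
  qed
  have "pairwise orthogonal (v ` ?L)"
    unfolding pairwise_def orthogonal_def using orth by (metis (no_types, lifting) imageE)
  moreover have "0 \<notin> v ` ?L" using v by force
  ultimately have "independent (v ` ?L)" by (rule pairwise_orthogonal_independent)
  then have "finite (v ` ?L)" using independent_bound by blast
  then show ?thesis using finite_imageD inj by blast
qed

lemma neg_eig_count_zero:
  fixes B :: "'a::euclidean_space \<Rightarrow> 'a \<Rightarrow> real"
  assumes sym: "\<And>u v. B u v = B v u"
  shows "neg_eig_count B T = 0 \<longleftrightarrow> (\<forall>l. restr_eigenvalue B T l \<longrightarrow> \<not> l < 0)"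
proof -
  have fin: "finite {l. l < 0 \<and> restr_eigenvalue B T l}"
    by (rule finite_subset[OF _ eigen_finite[OF sym, where T=T]]) auto
  have pos: "dim (restr_eigenspace B T l) \<noteq> 0" if "restr_eigenvalue B T l" for l
    using that unfolding restr_eigenvalue_def by (auto simp: dim_eq_0)
  show ?thesis unfolding neg_eig_count_def using fin pos by (auto simp: sum_eq_0_iff)
qed



lemma vec_rearr: "(A::'a::ab_group_add) + B = C + D \<Longrightarrow> A - C = D - B"
  by (simp add: algebra_simps)

lemma curve_lemma:
  fixes c :: "'r \<Rightarrow> 'a::euclidean_space \<Rightarrow> real"
    and c' :: "'r \<Rightarrow> 'a \<Rightarrow> ('a \<Rightarrow>\<^sub>L real)" and c'' :: "'r \<Rightarrow> 'a \<Rightarrow> ('a \<Rightarrow>\<^sub>L ('a \<Rightarrow>\<^sub>L real))"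
  assumes finE: "finite E"
    and C2: "\<forall>r\<in>E. C2_with (c r) (c' r) (c'' r)"
    and c0: "\<forall>r\<in>E. c r xb = 0"
    and licq: "\<forall>a. (\<forall>\<zeta>. (\<Sum>r\<in>E. a r * c' r xb \<zeta>) = 0) \<longrightarrow> (\<forall>r\<in>E. a r = 0)"
    and xiT: "\<forall>r\<in>E. c' r xb \<xi> = 0"
  shows "\<exists>X d. eventually (\<lambda>t. \<forall>r\<in>E. c r (X t) = t * s r) (at_right 0)
           \<and> ((\<lambda>t. (X t - xb) /\<^sub>R t) \<longlongrightarrow> d) (at_right 0)
           \<and> ((\<forall>r\<in>E. s r = 0) \<longrightarrow> d = \<xi>)"
proof -
  define grad where "grad r = (\<Sum>b\<in>Basis. (c' r xb b) *\<^sub>R b)" for r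
  have grad: "grad r \<bullet> \<zeta> = c' r xb \<zeta>" for r \<zeta>
  proof -
    have "grad r \<bullet> \<zeta> = (\<Sum>b\<in>Basis. c' r xb b * (b \<bullet> \<zeta>))" unfolding grad_def by (simp add: inner_sum_left)
    also have "\<dots> = (\<Sum>b\<in>Basis. (\<zeta> \<bullet> b) * c' r xb b)" by (simp add: inner_commute mult.commute)
    also have "\<dots> = c' r xb (\<Sum>b\<in>Basis. (\<zeta> \<bullet> b) *\<^sub>R b)" by (simp add: blinfun.sum_right blinfun.scaleR_right)
    also have "\<dots> = c' r xb \<zeta>" by (simp add: euclidean_representation)
    finally show ?thesis .
  qed
  define Sa where "Sa = span (grad ` E)"
  obtain Bs where Bs: "0 \<notin> Bs" "Bs \<subseteq> Sa" "pairwise orthogonal Bs" "independent Bs" "span Bs = Sa"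
    using orthogonal_basis_subspace[of Sa] unfolding Sa_def by (metis subspace_span)
  define Q where "Q \<zeta> = (\<Sum>b\<in>Bs. (b \<bullet> \<zeta> / (b \<bullet> b)) *\<^sub>R b)" for \<zeta>
  define P where "P \<zeta> = \<zeta> - Q \<zeta>" for \<zeta>
  have QSa: "Q \<zeta> \<in> Sa" for \<zeta> unfolding Q_def using Bs
    by (metis (no_types, lifting) span_base span_mul span_sum subsetD span_span)
  have Porth: "orthogonal z (P \<zeta>)" if "z \<in> Sa" for z \<zeta>
    unfolding P_def Q_def using Gram_Schmidt_step[OF Bs(3)] that Bs(5) by blast
  have PT: "c' r xb (P \<zeta>) = 0" if "r \<in> E" for r \<zeta>
    using Porth[of "grad r" \<zeta>] that unfolding Sa_def
    by (simp add: span_base orthogonal_def grad)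
  have linQ: "linear Q" unfolding Q_def
    by (intro linear_compose_sum) (auto intro!: linearI simp: inner_add_right scaleR_add_left add_divide_distrib)
  have linP: "linear P" unfolding P_def using linQ by (intro linear_compose_sub linear_ident) 
  have blP: "bounded_linear P" using linP linear_conv_bounded_linear by blast
  have zero_SaT: "z = 0" if "z \<in> Sa" "\<forall>r\<in>E. c' r xb z = 0" for z
  proof -
    have "orthogonal z z"
    proof (rule orthogonal_to_span)
      show "z \<in> span (grad ` E)" using that(1) unfolding Sa_def .
      fix y assume "y \<in> grad ` E"
      then obtain r where "r \<in> E" "y = grad r" by blast
      then show "orthogonal z y" using that(2) grad[of r z] by (simp add: orthogonal_def inner_commute)
    qed
    then show ?thesis by (simp add: orthogonal_def)
  qed
  have PidT: "P \<zeta> = \<zeta>" if "\<forall>r\<in>E. c' r xb \<zeta> = 0" for \<zeta>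
  proof -
    have "Q \<zeta> = 0"
    proof (rule zero_SaT[OF QSa], intro ballI)
      fix r assume "r \<in> E"
      have "Q \<zeta> = \<zeta> - P \<zeta>" unfolding P_def by simp
      then show "c' r xb (Q \<zeta>) = 0" using that PT[OF \<open>r\<in>E\<close>] \<open>r\<in>E\<close> by (simp add: blinfun.diff_right)
    qed
    then show ?thesis unfolding P_def by simp
  qed
  define Phi where "Phi x = (\<Sum>r\<in>E. c r x *\<^sub>R grad r) + P (x - xb)" for x
  define Phi' where "Phi' x = (\<Sum>r\<in>E. blinfun_scaleR_left (grad r) o\<^sub>L c' r x) + Blinfun P" for x
  have Phi'_apply: "Phi' x \<zeta> = (\<Sum>r\<in>E. c' r x \<zeta> *\<^sub>R grad r) + P \<zeta>" for x \<zeta>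
    unfolding Phi'_def using blP
    by (simp add: plus_blinfun.rep_eq blinfun.sum_left bounded_linear_Blinfun_apply)
  have derPhi: "(Phi has_derivative blinfun_apply (Phi' x)) (at x)" for x
  proof -
    have "(Phi has_derivative (\<lambda>\<zeta>. (\<Sum>r\<in>E. c' r x \<zeta> *\<^sub>R grad r) + P \<zeta>)) (at x)"
    proof -
      have d1: "\<And>r. r\<in>E \<Longrightarrow> (c r has_derivative blinfun_apply (c' r x)) (at x)" using C2 C2D(1) by blast
      have d2: "((\<lambda>x. P (x - xb)) has_derivative P) (at x)"
        using bounded_linear.has_derivative[OF blP has_derivative_diff[OF has_derivative_ident has_derivative_const]]
        by simp
      show ?thesis unfolding Phi_def
        by (intro has_derivative_add d2 has_derivative_sum has_derivative_scaleR_left d1) 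
    qed
    then show ?thesis by (simp add: Phi'_apply[abs_def])
  qed
  have contc': "continuous_on UNIV (c' r)" if "r \<in> E" for r
    using C2D(2)[OF C2[rule_format, OF that]]
    by (meson continuous_at_imp_continuous_on has_derivative_continuous)
  have contPhi': "continuous_on UNIV Phi'"
    unfolding Phi'_def by (intro continuous_intros contc') auto
  have Phi0: "Phi xb = 0" unfolding Phi_def using c0 linear_0[OF linP] by simp
  have injPhi': "Phi' xb \<zeta> = 0 \<Longrightarrow> \<zeta> = 0" for \<zeta>
  proof -
    assume z: "Phi' xb \<zeta> = 0"
    have "0 = Phi' xb \<zeta> \<bullet> \<zeta>" using z by simp
    also have "\<dots> = (\<Sum>r\<in>E. (c' r xb \<zeta>)^2) + P \<zeta> \<bullet> P \<zeta>"
    proof -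
      have "P \<zeta> \<bullet> \<zeta> = P \<zeta> \<bullet> P \<zeta>"
        using Porth[OF QSa, of \<zeta> \<zeta>] unfolding P_def orthogonal_def
        by (simp add: inner_diff_left inner_diff_right inner_commute)
      then show ?thesis unfolding Phi'_apply
        by (simp add: inner_add_left inner_sum_left grad power2_eq_square)
    qed
    finally have "(\<Sum>r\<in>E. (c' r xb \<zeta>)^2) + P \<zeta> \<bullet> P \<zeta> = 0" by simp
    moreover have "(\<Sum>r\<in>E. (c' r xb \<zeta>)^2) \<ge> 0" by (simp add: sum_nonneg)
    moreover have "P \<zeta> \<bullet> P \<zeta> \<ge> 0" by simp
    ultimately have A: "(\<Sum>r\<in>E. (c' r xb \<zeta>)^2) = 0" and B: "P \<zeta> \<bullet> P \<zeta> = 0" by linarith+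
    from A finE have "\<forall>r\<in>E. c' r xb \<zeta> = 0" by (simp add: sum_nonneg_eq_0_iff)
    then have "P \<zeta> = \<zeta>" by (rule PidT)
    then show "\<zeta> = 0" using B by simp
  qed
  have linPhi': "linear (blinfun_apply (Phi' xb))" by (simp add: bounded_linear.linear blinfun.bounded_linear_right)
  have injP': "inj (blinfun_apply (Phi' xb))"
    using injPhi' linear_injective_0[OF linPhi'] by blast
  obtain gi where gi: "linear gi" "gi \<circ> blinfun_apply (Phi' xb) = id"
    using linear_injective_left_inverse[OF linPhi' injP'] by blast
  define invf where "invf = Blinfun gi"
  have invf: "invf o\<^sub>L Phi' xb = id_blinfun"
  proof -
    have "bounded_linear gi" using gi(1) linear_conv_bounded_linear by blast
    then show ?thesis unfolding invf_def using gi(2)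
      by (intro blinfun_eqI) (simp add: bounded_linear_Blinfun_apply fun_eq_iff)
  qed
  obtain U' V g g' where U': "open U'" "U' \<subseteq> UNIV" "xb \<in> U'" and V: "open V" "Phi xb \<in> V"
    and hom: "homeomorphism U' V Phi g"
    and derg: "\<And>y. y \<in> V \<Longrightarrow> (g has_derivative (g' y)) (at y)"
    and g': "\<And>y. y \<in> V \<Longrightarrow> g' y = inv (blinfun_apply (Phi' (g y)))"
    and "\<And>y. y \<in> V \<Longrightarrow> bij (blinfun_apply (Phi'(g y)))"
    by (rule inverse_function_theorem[OF open_UNIV derPhi contPhi' UNIV_I invf]) (rule that; assumption)
  have gxb: "g 0 = xb" using hom U'(3) Phi0 unfolding homeomorphism_def by force
  have V0: "0 \<in> V" using V Phi0 by simp
  define w where "w = (\<Sum>r\<in>E. s r *\<^sub>R grad r) + \<xi>"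
  define X where "X t = g (t *\<^sub>R w)" for t
  define G where "G = g' 0"
  have GG: "G = inv (blinfun_apply (Phi' xb))" using g'[OF V0] gxb G_def by simp
  have ev_V: "eventually (\<lambda>t. t *\<^sub>R w \<in> V) (at_right (0::real))"
  proof -
    have "((\<lambda>t::real. t *\<^sub>R w) \<longlongrightarrow> 0 *\<^sub>R w) (at_right 0)" by (intro tendsto_intros)
    then show ?thesis using V(1) V0 by (simp add: topological_tendstoD)
  qed
  have part1: "eventually (\<lambda>t. \<forall>r\<in>E. c r (X t) = t * s r) (at_right 0)"
    using ev_V
  proof (rule eventually_mono)
    fix t :: real assume tV: "t *\<^sub>R w \<in> V"
    have "Phi (X t) = t *\<^sub>R w" using hom tV unfolding X_def homeomorphism_def by simp
    then have h: "(\<Sum>r\<in>E. c r (X t) *\<^sub>R grad r) + P (X t - xb) = t *\<^sub>R (\<Sum>r\<in>E. s r *\<^sub>R grad r) + t *\<^sub>R \<xi>"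
      unfolding Phi_def w_def by (simp add: scaleR_add_right)
    have e1: "(\<Sum>r\<in>E. (c r (X t) - t * s r) *\<^sub>R grad r) = (\<Sum>r\<in>E. c r (X t) *\<^sub>R grad r) - t *\<^sub>R (\<Sum>r\<in>E. s r *\<^sub>R grad r)"
      by (simp add: scaleR_diff_left sum_subtractf scaleR_sum_right)
    have eq: "(\<Sum>r\<in>E. (c r (X t) - t * s r) *\<^sub>R grad r) = t *\<^sub>R \<xi> - P (X t - xb)"
      unfolding e1 by (rule vec_rearr[OF h])
    have "(\<Sum>r\<in>E. (c r (X t) - t * s r) *\<^sub>R grad r) = 0"
    proof (rule zero_SaT)
      show "(\<Sum>r\<in>E. (c r (X t) - t * s r) *\<^sub>R grad r) \<in> Sa"
        unfolding Sa_def by (intro span_sum span_mul span_base) auto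
      show "\<forall>r\<in>E. c' r xb (\<Sum>r\<in>E. (c r (X t) - t * s r) *\<^sub>R grad r) = 0"
        unfolding eq using xiT PT by (simp add: blinfun.diff_right blinfun.scaleR_right)
    qed
    then have "\<forall>\<zeta>. (\<Sum>r\<in>E. (c r (X t) - t * s r) * c' r xb \<zeta>) = 0"
    proof (intro allI)
      fix \<zeta> assume z: "(\<Sum>r\<in>E. (c r (X t) - t * s r) *\<^sub>R grad r) = 0"
      have "0 = (\<Sum>r\<in>E. (c r (X t) - t * s r) *\<^sub>R grad r) \<bullet> \<zeta>" using z by simp
      also have "\<dots> = (\<Sum>r\<in>E. (c r (X t) - t * s r) * c' r xb \<zeta>)" by (simp add: inner_sum_left grad)
      finally show "(\<Sum>r\<in>E. (c r (X t) - t * s r) * c' r xb \<zeta>) = 0" by simp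
    qed
    then have "\<forall>r\<in>E. c r (X t) - t * s r = 0" using spec[OF licq, of "\<lambda>r. c r (X t) - t * s r"] by blast
    then show "\<forall>r\<in>E. c r (X t) = t * s r" by simp
  qed
  have derG: "(g has_derivative G) (at 0)" using derg[OF V0] G_def by simp
  have blG: "bounded_linear G" using derG has_derivative_bounded_linear by blast
  have part2: "((\<lambda>t. (X t - xb) /\<^sub>R t) \<longlongrightarrow> G w) (at_right 0)"
  proof -
    have "((\<lambda>t. g (t *\<^sub>R w)) has_derivative (\<lambda>t. G (t *\<^sub>R w))) (at (0::real))"
    proof -
      have l: "((\<lambda>t::real. t *\<^sub>R w) has_derivative (\<lambda>t. t *\<^sub>R w)) (at 0)"
        by (auto intro!: derivative_eq_intros)
      show ?thesis using has_derivative_compose[OF l, of g G] derG by simp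
    qed
    then have "((\<lambda>t. X t) has_vector_derivative G w) (at (0::real))"
      unfolding has_vector_derivative_def X_def
      by (rule has_derivative_eq_rhs) (simp add: linear_scale[OF bounded_linear.linear[OF blG]] fun_eq_iff)
    then have "(X has_derivative (\<lambda>t. t *\<^sub>R G w)) (at 0 within {0<..})"
      unfolding has_vector_derivative_def by (rule has_derivative_subset) auto
    then have "((\<lambda>t. (X t - X 0 - t *\<^sub>R G w) /\<^sub>R norm t) \<longlongrightarrow> 0) (at_right 0)"
      unfolding has_derivative_at_within by simp
    then have "((\<lambda>t. (X t - X 0 - t *\<^sub>R G w) /\<^sub>R norm t + G w) \<longlongrightarrow> 0 + G w) (at_right 0)"
      by (intro tendsto_intros)
    moreover have "\<forall>\<^sub>F t in at_right (0::real). t > 0" by (simp add: eventually_at_filter)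
    then have "\<forall>\<^sub>F t in at_right (0::real). (X t - X 0 - t *\<^sub>R G w) /\<^sub>R norm t + G w = (X t - xb) /\<^sub>R t"
      by (rule eventually_mono) (simp add: X_def gxb scaleR_diff_right)
    ultimately show ?thesis by (simp add: tendsto_cong)
  qed
  have part3: "G w = \<xi>" if "\<forall>r\<in>E. s r = 0"
  proof -
    have w: "w = \<xi>" unfolding w_def using that by simp
    have "Phi' xb \<xi> = \<xi>" unfolding Phi'_apply using xiT PidT[OF xiT] by simp
    have "G (Phi' xb \<xi>) = \<xi>" unfolding GG by (rule inv_f_f[OF injP'])
    then show ?thesis using w \<open>Phi' xb \<xi> = \<xi>\<close> by simp
  qed
  show ?thesis using part1 part2 part3 by blast
qed


lemma lag_taylor:
  fixes f :: "'a::euclidean_space \<Rightarrow> real" and c :: "'r \<Rightarrow> 'a \<Rightarrow> real"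
  assumes finE: "finite E" and C2f: "C2_with f f' f''"
    and C2c: "\<forall>r\<in>E. C2_with (c r) (c' r) (c'' r)" and e: "e > 0"
  shows "\<forall>\<^sub>F y in nhds x. \<bar>(f y - (\<Sum>r\<in>E. m r * c r y)) - (f x - (\<Sum>r\<in>E. m r * c r x))
      - (f' x (y - x) - (\<Sum>r\<in>E. m r * c' r x (y - x)))
      - D2 (f'' x - (\<Sum>r\<in>E. m r *\<^sub>R c'' r x)) (y - x) (y - x) / 2\<bar> \<le> e * norm (y - x)^2"
proof -
  define K where "K = 1 + (\<Sum>r\<in>E. \<bar>m r\<bar>)"
  have K: "K \<ge> 1" unfolding K_def by (simp add: sum_nonneg)
  define e' where "e' = e / K"
  have e': "e' > 0" using e K unfolding e'_def by simp
  define R where "R \<phi> \<phi>' \<phi>'' y = \<phi> y - \<phi> x - \<phi>' x (y - x) - D2 (\<phi>'' x) (y - x) (y - x) / 2"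
    for \<phi> :: "'a \<Rightarrow> real" and \<phi>' :: "'a \<Rightarrow> 'a \<Rightarrow>\<^sub>L real" and \<phi>'' :: "'a \<Rightarrow> 'a \<Rightarrow>\<^sub>L 'a \<Rightarrow>\<^sub>L real" and y
  have ev: "\<forall>\<^sub>F y in nhds x. \<bar>R \<phi> \<phi>' \<phi>'' y\<bar> \<le> e' * norm (y - x)^2" if "C2_with \<phi> \<phi>' \<phi>''" for \<phi> \<phi>' \<phi>''
    using taylor_small[OF that e', of x] unfolding eventually_nhds_metric R_def dist_norm by blast
  have evall: "\<forall>\<^sub>F y in nhds x. \<bar>R f f' f'' y\<bar> \<le> e' * norm (y - x)^2 \<and>
       (\<forall>r\<in>E. \<bar>R (c r) (c' r) (c'' r) y\<bar> \<le> e' * norm (y - x)^2)"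
  proof -
    have "\<forall>\<^sub>F y in nhds x. \<forall>r\<in>E. \<bar>R (c r) (c' r) (c'' r) y\<bar> \<le> e' * norm (y - x)^2"
      by (rule eventually_ball_finite[OF finE]) (use ev C2c in blast)
    then show ?thesis using ev[OF C2f] by (simp add: eventually_conj_iff)
  qed
  show ?thesis using evall
  proof (rule eventually_mono)
    fix y assume H: "\<bar>R f f' f'' y\<bar> \<le> e' * norm (y - x)^2 \<and>
       (\<forall>r\<in>E. \<bar>R (c r) (c' r) (c'' r) y\<bar> \<le> e' * norm (y - x)^2)"
    let ?N = "norm (y - x)^2"
    have D2eq: "D2 (f'' x - (\<Sum>r\<in>E. m r *\<^sub>R c'' r x)) (y - x) (y - x) =
       D2 (f'' x) (y - x) (y - x) - (\<Sum>r\<in>E. m r * D2 (c'' r x) (y - x) (y - x))"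
      by (simp add: D2_diff D2_Asum D2_Ascale)
    have expr: "(f y - (\<Sum>r\<in>E. m r * c r y)) - (f x - (\<Sum>r\<in>E. m r * c r x))
      - (f' x (y - x) - (\<Sum>r\<in>E. m r * c' r x (y - x)))
      - D2 (f'' x - (\<Sum>r\<in>E. m r *\<^sub>R c'' r x)) (y - x) (y - x) / 2
      = R f f' f'' y - (\<Sum>r\<in>E. m r * R (c r) (c' r) (c'' r) y)"
      unfolding D2eq R_def
      by (simp add: algebra_simps sum_subtractf sum_distrib_left sum.distrib sum_divide_distrib diff_divide_distrib)
    have "\<bar>R f f' f'' y - (\<Sum>r\<in>E. m r * R (c r) (c' r) (c'' r) y)\<bar>
        \<le> \<bar>R f f' f'' y\<bar> + (\<Sum>r\<in>E. \<bar>m r\<bar> * \<bar>R (c r) (c' r) (c'' r) y\<bar>)"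
      by (rule order_trans[OF abs_triangle_ineq4]) (simp add: order_trans[OF sum_abs] abs_mult)
    also have "\<dots> \<le> e' * ?N + (\<Sum>r\<in>E. \<bar>m r\<bar> * (e' * ?N))"
      using H by (intro add_mono sum_mono mult_left_mono) auto
    also have "\<dots> = e' * K * ?N" unfolding K_def by (simp add: sum_distrib_right sum_distrib_left algebra_simps)
    also have "\<dots> = e * ?N" unfolding e'_def using K by simp
    finally show "\<bar>(f y - (\<Sum>r\<in>E. m r * c r y)) - (f x - (\<Sum>r\<in>E. m r * c r x))
      - (f' x (y - x) - (\<Sum>r\<in>E. m r * c' r x (y - x)))
      - D2 (f'' x - (\<Sum>r\<in>E. m r *\<^sub>R c'' r x)) (y - x) (y - x) / 2\<bar> \<le> e * ?N"
      unfolding expr .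
  qed
qed

lemma fo_seq:
  assumes "(\<phi> has_derivative \<phi>') (at x)" "y \<longlonglongrightarrow> x" "\<forall>n. y n \<noteq> x"
  shows "((\<lambda>n. (\<phi> (y n) - \<phi> x - \<phi>' (y n - x)) /\<^sub>R norm (y n - x)) \<longlongrightarrow> 0) sequentially"
proof -
  have 1: "((\<lambda>z. (\<phi> z - \<phi> x - \<phi>' (z - x)) /\<^sub>R norm (z - x)) \<longlongrightarrow> 0) (at x)"
    using assms(1) unfolding has_derivative_at_within by simp
  have 2: "filterlim y (at x) sequentially"
    using assms(2,3) by (intro filterlim_atI) auto
  show ?thesis using filterlim_compose[OF 1 2] by (simp add: o_def)
qed

lemma suff_core:
  fixes f :: "'a::euclidean_space \<Rightarrow> real" and c :: "'r \<Rightarrow> 'a \<Rightarrow> real"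
  assumes finE: "finite E" and GE: "G \<subseteq> E" and C2f: "C2_with f f' f''"
    and C2c: "\<forall>r\<in>E. C2_with (c r) (c' r) (c'' r)"
    and c0: "\<forall>r\<in>E. c r xb = 0"
    and stat: "\<forall>\<xi>. f' xb \<xi> = (\<Sum>r\<in>E. m r * c' r xb \<xi>)"
    and mpos: "\<forall>r\<in>G. m r > 0"
    and pd: "\<forall>\<xi>. (\<forall>r\<in>E. c' r xb \<xi> = 0) \<longrightarrow> \<xi> \<noteq> 0 \<longrightarrow> D2 (f'' xb - (\<Sum>r\<in>E. m r *\<^sub>R c'' r xb)) \<xi> \<xi> > 0"
    and feas: "\<exists>\<delta>>0. \<forall>x\<in>M. dist x xb < \<delta> \<longrightarrow> (\<forall>r\<in>E-G. c r x = 0) \<and> (\<forall>r\<in>G. c r x \<ge> 0)"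
  shows "\<exists>\<epsilon>>0. \<forall>x\<in>M. dist x xb < \<epsilon> \<longrightarrow> f xb \<le> f x"
proof (rule ccontr)
  assume neg: "\<not> ?thesis"
  obtain \<delta> where \<delta>: "\<delta> > 0" "\<forall>x\<in>M. dist x xb < \<delta> \<longrightarrow> (\<forall>r\<in>E-G. c r x = 0) \<and> (\<forall>r\<in>G. c r x \<ge> 0)"
    using feas by blast
  define A where "A = f'' xb - (\<Sum>r\<in>E. m r *\<^sub>R c'' r xb)"
  have "\<forall>n. \<exists>x\<in>M. dist x xb < min \<delta> (1 / Suc n) \<and> f x < f xb"
  proof
    fix n
    have "min \<delta> (1 / Suc n) > 0" using \<delta> by simp
    then show "\<exists>x\<in>M. dist x xb < min \<delta> (1 / Suc n) \<and> f x < f xb" using neg by (meson not_le)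
  qed
  then obtain xs where xs: "\<And>n. xs n \<in> M" "\<And>n. dist (xs n) xb < \<delta>" "\<And>n. dist (xs n) xb < 1 / Suc n"
    "\<And>n. f (xs n) < f xb"
    by (metis min_less_iff_conj)
  have xsne: "xs n \<noteq> xb" for n using xs(4)[of n] by auto
  define u where "u n = (xs n - xb) /\<^sub>R norm (xs n - xb)" for n
  have usph: "u n \<in> sphere 0 1" for n using xsne unfolding u_def by simp
  obtain d rr where d: "d \<in> sphere 0 1" and rr: "strict_mono rr" and ulim: "(u \<circ> rr) \<longlonglongrightarrow> d"
    using compact_imp_seq_compact[OF compact_sphere[of 0 1]] usph unfolding seq_compact_def by metis
  define y where "y n = xs (rr n)" for n
  define U where "U n = u (rr n)" for n
  define t where "t n = norm (y n - xb)" for n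
  have Ulim: "U \<longlonglongrightarrow> d" using ulim unfolding U_def o_def .
  have yne: "y n \<noteq> xb" for n unfolding y_def by (rule xsne)
  have tpos: "t n > 0" for n using yne unfolding t_def by simp
  have ylim: "y \<longlonglongrightarrow> xb"
  proof -
    have "xs \<longlonglongrightarrow> xb"
    proof (rule tendsto_sandwich[of "\<lambda>_. 0" "\<lambda>n. dist (xs n) xb" _ "\<lambda>n. 1 / Suc n", THEN tendsto_dist_iff[THEN iffD2]])
      show "\<forall>\<^sub>F n in sequentially. 0 \<le> dist (xs n) xb" by simp
      show "\<forall>\<^sub>F n in sequentially. dist (xs n) xb \<le> 1 / real (Suc n)"
        by (rule always_eventually) (use xs(3) less_imp_le in blast)
      show "((\<lambda>n. 0::real) \<longlongrightarrow> 0) sequentially" by simp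
      show "((\<lambda>n. 1 / real (Suc n)) \<longlongrightarrow> 0) sequentially" by (rule LIMSEQ_Suc[OF lim_const_over_n])
    qed
    then show ?thesis unfolding y_def using LIMSEQ_subseq_LIMSEQ[OF _ rr] by (auto simp: o_def)
  qed
  have vU: "y n - xb = t n *\<^sub>R U n" for n
    using tpos[of n] unfolding U_def u_def y_def t_def by simp
  have Unorm: "norm (U n) = 1" for n using usph unfolding U_def by simp
  have ymem: "y n \<in> M" "dist (y n) xb < \<delta>" "f (y n) < f xb" for n unfolding y_def using xs by auto
  have fo: "((\<lambda>n. (\<phi> (y n) - \<phi> xb) / t n - \<phi>' (U n)) \<longlongrightarrow> 0) sequentially"
    if der: "(\<phi> has_derivative blinfun_apply \<phi>') (at xb)" for \<phi> :: "'a \<Rightarrow> real" and \<phi>'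
  proof -
    have "((\<lambda>n. (\<phi> (y n) - \<phi> xb - \<phi>' (y n - xb)) /\<^sub>R norm (y n - xb)) \<longlongrightarrow> 0) sequentially"
      using fo_seq[OF der ylim] yne by blast
    moreover have "(\<phi> (y n) - \<phi> xb - \<phi>' (y n - xb)) /\<^sub>R norm (y n - xb) = (\<phi> (y n) - \<phi> xb) / t n - \<phi>' (U n)" for n
      using tpos[of n] Unorm[of n] unfolding vU
      by (simp add: blinfun.scaleR_right field_simps)
    ultimately show ?thesis by simp
  qed
  have limlin: "((\<lambda>n. \<phi>' (U n)) \<longlongrightarrow> \<phi>' d) sequentially" for \<phi>' :: "'a \<Rightarrow>\<^sub>L real"
    using Ulim by (intro tendsto_intros)
  have derc: "(c r has_derivative blinfun_apply (c' r xb)) (at xb)" if "r \<in> E" for r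
    using C2D(1) C2c that by blast
  have dEG: "c' r xb d = 0" if "r \<in> E - G" for r
  proof -
    have "((\<lambda>n. (c r (y n) - c r xb) / t n - c' r xb (U n)) \<longlongrightarrow> 0) sequentially"
      using fo[OF derc] that by blast
    moreover have "(c r (y n) - c r xb) / t n - c' r xb (U n) = - c' r xb (U n)" for n
      using \<delta>(2) ymem c0 that by auto
    ultimately have "((\<lambda>n. - c' r xb (U n)) \<longlongrightarrow> 0) sequentially" by simp
    then have "((\<lambda>n. c' r xb (U n)) \<longlongrightarrow> 0) sequentially" using tendsto_minus[of "\<lambda>n. - c' r xb (U n)" 0] by simp
    then show ?thesis using limlin[of "c' r xb"] LIMSEQ_unique by blast
  qed
  have dG: "c' r xb d \<ge> 0" if "r \<in> G" for r
  proof -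
    have rE: "r \<in> E" using that GE by auto
    have l1: "((\<lambda>n. (c r (y n) - c r xb) / t n - c' r xb (U n)) \<longlongrightarrow> 0) sequentially"
      using fo[OF derc[OF rE]] by blast
    have "c r (y n) / t n \<ge> 0" for n using \<delta>(2) ymem that tpos[of n] by auto
    then have le: "- ((c r (y n) - c r xb) / t n - c' r xb (U n)) \<le> c' r xb (U n)" for n
      using c0 rE by auto
    have "- 0 \<le> c' r xb d"
      by (rule tendsto_le[OF _ limlin[of "c' r xb"] tendsto_minus[OF l1]]) (use le in auto)
    then show ?thesis by simp
  qed
  have df: "f' xb d \<le> 0"
  proof -
    have l1: "((\<lambda>n. (f (y n) - f xb) / t n - f' xb (U n)) \<longlongrightarrow> 0) sequentially"
      using fo[OF C2D(1)[OF C2f]] by blast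
    have "(f (y n) - f xb) / t n < 0" for n using ymem(3)[of n] tpos[of n] by (simp add: divide_neg_pos)
    then have le: "f' xb (U n) \<le> - ((f (y n) - f xb) / t n - f' xb (U n))" for n
      by (smt (verit))
    have "f' xb d \<le> - 0"
      by (rule tendsto_le[OF _ tendsto_minus[OF l1] limlin[of "f' xb"]]) (use le in auto)
    then show ?thesis by simp
  qed
  have dT: "\<forall>r\<in>E. c' r xb d = 0"
  proof -
    have "f' xb d = (\<Sum>r\<in>E. m r * c' r xb d)" using stat by blast
    also have "\<dots> = (\<Sum>r\<in>G. m r * c' r xb d)"
      using dEG GE finE by (intro sum.mono_neutral_right) auto
    finally have s: "(\<Sum>r\<in>G. m r * c' r xb d) \<le> 0" using df by simp
    have nn: "\<forall>r\<in>G. m r * c' r xb d \<ge> 0" using dG mpos by (simp add: less_imp_le)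
    have finG: "finite G" using finite_subset[OF GE finE] .
    have "\<forall>r\<in>G. m r * c' r xb d = 0"
      using sum_nonneg_eq_0_iff[OF finG, of "\<lambda>r. m r * c' r xb d"] s nn sum_nonneg[of G "\<lambda>r. m r * c' r xb d"]
      by auto
    then have "\<forall>r\<in>G. c' r xb d = 0" using mpos by (metis less_numeral_extra(3) mult_eq_0_iff)
    then show ?thesis using dEG by blast
  qed
  have pos: "D2 A d d > 0" using pd dT d unfolding A_def by auto
  define e where "e = D2 A d d / 8"
  have e: "e > 0" using pos unfolding e_def by simp
  have ev: "\<forall>\<^sub>F z in nhds xb. \<bar>(f z - (\<Sum>r\<in>E. m r * c r z)) - (f xb - (\<Sum>r\<in>E. m r * c r xb))
      - (f' xb (z - xb) - (\<Sum>r\<in>E. m r * c' r xb (z - xb)))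
      - D2 A (z - xb) (z - xb) / 2\<bar> \<le> e * norm (z - xb)^2"
    using lag_taylor[OF finE C2f C2c e, where x=xb and m=m] unfolding A_def .
  have evn: "\<forall>\<^sub>F n in sequentially. \<bar>(f (y n) - (\<Sum>r\<in>E. m r * c r (y n))) - (f xb - (\<Sum>r\<in>E. m r * c r xb))
      - (f' xb (y n - xb) - (\<Sum>r\<in>E. m r * c' r xb (y n - xb)))
      - D2 A (y n - xb) (y n - xb) / 2\<bar> \<le> e * norm (y n - xb)^2"
    using filterlim_iff[THEN iffD1, OF ylim, rule_format, OF ev] .
  have small: "\<forall>\<^sub>F n in sequentially. D2 A (U n) (U n) \<le> 2 * e"
    using evn
  proof (rule eventually_mono)
    fix n
    assume H: "\<bar>(f (y n) - (\<Sum>r\<in>E. m r * c r (y n))) - (f xb - (\<Sum>r\<in>E. m r * c r xb))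
      - (f' xb (y n - xb) - (\<Sum>r\<in>E. m r * c' r xb (y n - xb)))
      - D2 A (y n - xb) (y n - xb) / 2\<bar> \<le> e * norm (y n - xb)^2"
    have z1: "f' xb (y n - xb) - (\<Sum>r\<in>E. m r * c' r xb (y n - xb)) = 0" using stat by simp
    have z2: "(\<Sum>r\<in>E. m r * c r xb) = 0" using c0 by simp
    have z3: "(\<Sum>r\<in>E. m r * c r (y n)) = (\<Sum>r\<in>G. m r * c r (y n))"
      using \<delta>(2) ymem GE finE by (intro sum.mono_neutral_right) auto
    have z4: "(\<Sum>r\<in>G. m r * c r (y n)) \<ge> 0"
    proof (rule sum_nonneg)
      fix r assume "r \<in> G"
      then show "0 \<le> m r * c r (y n)" using \<delta>(2) ymem mpos by (simp add: less_imp_le)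
    qed
    have "D2 A (y n - xb) (y n - xb) / 2 \<le> e * norm (y n - xb)^2 + (f (y n) - f xb)"
      using H z1 z2 z3 z4 by linarith
    also have "\<dots> < e * norm (y n - xb)^2" using ymem(3)[of n] by simp
    finally have "D2 A (y n - xb) (y n - xb) < 2 * e * (t n)^2" unfolding t_def by simp
    then have "(t n)^2 * D2 A (U n) (U n) < (t n)^2 * (2 * e)"
      unfolding vU by (simp add: D2_scale_left D2_scale_right power2_eq_square algebra_simps)
    then show "D2 A (U n) (U n) \<le> 2 * e" using tpos[of n] by simp
  qed
  have "((\<lambda>n. D2 A (U n) (U n)) \<longlongrightarrow> D2 A d d) sequentially"
    using Ulim unfolding D2_def by (intro tendsto_intros)
  then have "D2 A d d \<le> 2 * e" using small by (rule tendsto_upperbound) simp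
  then show False using pos unfolding e_def by simp
qed


lemma nec_core:
  fixes f :: "'a::euclidean_space \<Rightarrow> real" and c :: "'r \<Rightarrow> 'a \<Rightarrow> real"
  assumes finE: "finite E" and C2f: "C2_with f f' f''"
    and C2c: "\<forall>r\<in>E. C2_with (c r) (c' r) (c'' r)"
    and c0: "\<forall>r\<in>E. c r xb = 0"
    and licq: "\<forall>a. (\<forall>\<zeta>. (\<Sum>r\<in>E. a r * c' r xb \<zeta>) = 0) \<longrightarrow> (\<forall>r\<in>E. a r = 0)"
    and stat: "\<forall>\<xi>. f' xb \<xi> = (\<Sum>r\<in>E. m r * c' r xb \<xi>)"
    and xiT: "\<forall>r\<in>E. c' r xb \<xi> = 0"
    and hyp: "((\<forall>r\<in>E. s r = 0) \<and> D2 (f'' xb - (\<Sum>r\<in>E. m r *\<^sub>R c'' r xb)) \<xi> \<xi> < 0) \<or> (\<Sum>r\<in>E. m r * s r) < 0"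
    and feas: "\<exists>\<delta>>0. \<forall>x t. dist x xb < \<delta> \<longrightarrow> t > 0 \<longrightarrow> (\<forall>r\<in>E. c r x = t * s r) \<longrightarrow> x \<in> M"
    and lmin: "\<exists>\<epsilon>>0. \<forall>x\<in>M. dist x xb < \<epsilon> \<longrightarrow> f xb \<le> f x"
  shows False
proof -
  define A where "A = f'' xb - (\<Sum>r\<in>E. m r *\<^sub>R c'' r xb)"
  define Lag where "Lag x = f x - (\<Sum>r\<in>E. m r * c r x)" for x
  obtain X d where Xev: "\<forall>\<^sub>F t in at_right 0. \<forall>r\<in>E. c r (X t) = t * s r"
    and Xlim: "((\<lambda>t. (X t - xb) /\<^sub>R t) \<longlongrightarrow> d) (at_right 0)"
    and Xd: "(\<forall>r\<in>E. s r = 0) \<longrightarrow> d = \<xi>"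
    using curve_lemma[OF finE C2c c0 licq xiT, of s] by blast
  define q where "q t = (X t - xb) /\<^sub>R t" for t
  have tpos: "\<forall>\<^sub>F t in at_right (0::real). t > 0" by (simp add: eventually_at_filter)
  have Xq: "X t - xb = t *\<^sub>R q t" if "t > 0" for t using that unfolding q_def by simp
  have qlim: "(q \<longlongrightarrow> d) (at_right 0)" using Xlim unfolding q_def .
  have Xconv: "((\<lambda>t. X t) \<longlongrightarrow> xb) (at_right 0)"
  proof -
    have "((\<lambda>t. xb + t *\<^sub>R q t) \<longlongrightarrow> xb + 0 *\<^sub>R d) (at_right 0)"
      by (intro tendsto_intros qlim)
    moreover have "\<forall>\<^sub>F t in at_right 0. xb + t *\<^sub>R q t = X t"
      using tpos by (rule eventually_mono) (simp add: Xq[symmetric])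
    ultimately show ?thesis by (simp add: tendsto_cong)
  qed
  have Qlim: "((\<lambda>t. (Lag (X t) - Lag xb) / t^2) \<longlongrightarrow> D2 A d d / 2) (at_right 0)"
  proof (rule tendstoI)
    fix \<epsilon> :: real assume \<epsilon>: "\<epsilon> > 0"
    define K where "K = (norm d + 1)^2"
    have K: "K > 0" unfolding K_def by (metis add_pos_nonneg norm_ge_zero zero_less_one zero_less_power add.commute)
    define e where "e = \<epsilon> / (2 * K)"
    have e: "e > 0" using \<epsilon> K unfolding e_def by simp
    have ev1: "\<forall>\<^sub>F t in at_right 0. \<bar>Lag (X t) - Lag xb - D2 A (X t - xb) (X t - xb) / 2\<bar> \<le> e * norm (X t - xb)^2"
    proof -
      have "\<forall>\<^sub>F z in nhds xb. \<bar>Lag z - Lag xb - (f' xb (z - xb) - (\<Sum>r\<in>E. m r * c' r xb (z - xb)))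
          - D2 A (z - xb) (z - xb) / 2\<bar> \<le> e * norm (z - xb)^2"
        using lag_taylor[OF finE C2f C2c e, where x=xb and m=m] unfolding A_def Lag_def .
      then have "\<forall>\<^sub>F z in nhds xb. \<bar>Lag z - Lag xb - D2 A (z - xb) (z - xb) / 2\<bar> \<le> e * norm (z - xb)^2"
        using stat by simp
      then show ?thesis using filterlim_iff[THEN iffD1, OF Xconv, rule_format] by blast
    qed
    have ev2: "\<forall>\<^sub>F t in at_right 0. dist (D2 A (q t) (q t) / 2) (D2 A d d / 2) < \<epsilon> / 2"
    proof -
      have "((\<lambda>t. D2 A (q t) (q t)) \<longlongrightarrow> D2 A d d) (at_right 0)"
        using qlim unfolding D2_def by (intro tendsto_intros)
      then have "((\<lambda>t. D2 A (q t) (q t) / 2) \<longlongrightarrow> D2 A d d / 2) (at_right 0)"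
        by (intro tendsto_divide tendsto_const) simp_all
      then show ?thesis using \<epsilon> by (intro tendstoD) auto
    qed
    have ev3: "\<forall>\<^sub>F t in at_right 0. norm (q t) < norm d + 1"
    proof -
      have "((\<lambda>t. norm (q t)) \<longlongrightarrow> norm d) (at_right 0)" using qlim by (intro tendsto_intros)
      then show ?thesis by (rule order_tendstoD) simp
    qed
    show "\<forall>\<^sub>F t in at_right 0. dist ((Lag (X t) - Lag xb) / t^2) (D2 A d d / 2) < \<epsilon>"
      using ev1 ev2 ev3 tpos
    proof (eventually_elim)
      case (elim t)
      have t2: "t^2 > 0" using elim(4) by simp
      have "D2 A (X t - xb) (X t - xb) = t^2 * D2 A (q t) (q t)"
        using Xq[OF elim(4)] by (simp add: D2_scale_left D2_scale_right power2_eq_square)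
      moreover have "norm (X t - xb)^2 = t^2 * norm (q t)^2"
        using Xq[OF elim(4)] elim(4) by (simp add: power_mult_distrib)
      ultimately have "\<bar>Lag (X t) - Lag xb - t^2 * D2 A (q t) (q t) / 2\<bar> \<le> e * (t^2 * norm (q t)^2)"
        using elim(1) by simp
      then have H: "\<bar>Lag (X t) - Lag xb - t^2 * D2 A (q t) (q t) / 2\<bar> / t^2 \<le> e * norm (q t)^2"
        using t2 by (simp add: divide_le_eq mult.commute mult.left_commute)
      have eq: "(Lag (X t) - Lag xb) / t^2 - D2 A (q t) (q t) / 2 = (Lag (X t) - Lag xb - t^2 * D2 A (q t) (q t) / 2) / t^2"
        using t2 by (simp add: diff_divide_distrib)
      have "\<bar>(Lag (X t) - Lag xb) / t^2 - D2 A (q t) (q t) / 2\<bar> \<le> e * norm (q t)^2"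
        unfolding eq using H t2 by simp
      moreover have "e * norm (q t)^2 \<le> e * K"
        unfolding K_def using elim(3) e by (intro mult_left_mono power_mono) auto
      moreover have "e * K = \<epsilon> / 2" unfolding e_def using K by simp
      ultimately show ?case using elim(2) unfolding dist_real_def by linarith
    qed
  qed
  have fdiff: "\<forall>\<^sub>F t in at_right 0. f (X t) - f xb = (Lag (X t) - Lag xb) + t * (\<Sum>r\<in>E. m r * s r)"
    using Xev
  proof (rule eventually_mono)
    fix t assume H: "\<forall>r\<in>E. c r (X t) = t * s r"
    have "(\<Sum>r\<in>E. m r * c r (X t)) = t * (\<Sum>r\<in>E. m r * s r)"
      using H by (simp add: sum_distrib_left mult.left_commute)
    then show "f (X t) - f xb = (Lag (X t) - Lag xb) + t * (\<Sum>r\<in>E. m r * s r)"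
      unfolding Lag_def using c0 by simp
  qed
  have negev: "\<forall>\<^sub>F t in at_right 0. f (X t) < f xb"
    using hyp[folded A_def]
  proof (elim disjE conjE)
    assume s0: "\<forall>r\<in>E. s r = 0" and neg: "D2 A \<xi> \<xi> < 0"
    have "d = \<xi>" using Xd s0 by blast
    have "\<forall>\<^sub>F t in at_right 0. (Lag (X t) - Lag xb) / t^2 < 0"
      by (rule order_tendstoD(2)[OF Qlim]) (use neg \<open>d = \<xi>\<close> in simp)
    then show ?thesis using fdiff tpos
    proof (eventually_elim)
      case (elim t)
      have "Lag (X t) - Lag xb < 0" using elim(1) elim(3) by (simp add: divide_less_0_iff)
      then show ?case using elim(2) s0 by simp
    qed
  next
    assume neg: "(\<Sum>r\<in>E. m r * s r) < 0"
    have "((\<lambda>t. t * ((Lag (X t) - Lag xb) / t^2) + (\<Sum>r\<in>E. m r * s r)) \<longlongrightarrow> 0 * (D2 A d d / 2) + (\<Sum>r\<in>E. m r * s r)) (at_right 0)"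
      by (intro tendsto_add tendsto_mult Qlim tendsto_ident_at tendsto_const)
    then have "\<forall>\<^sub>F t in at_right 0. t * ((Lag (X t) - Lag xb) / t^2) + (\<Sum>r\<in>E. m r * s r) < 0"
      by (rule order_tendstoD(2)) (use neg in simp)
    then show ?thesis using fdiff tpos
    proof (eventually_elim)
      case (elim t)
      have a: "(f (X t) - f xb) / t = (Lag (X t) - Lag xb) / t + (\<Sum>r\<in>E. m r * s r)"
        using elim(2) elim(3) by (simp add: add_divide_distrib)
      have b: "t * ((Lag (X t) - Lag xb) / t^2) = (Lag (X t) - Lag xb) / t"
        using elim(3) by (simp add: power2_eq_square)
      have "t * ((Lag (X t) - Lag xb) / t^2) + (\<Sum>r\<in>E. m r * s r) = (f (X t) - f xb) / t"
        unfolding a b ..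
      then have "(f (X t) - f xb) / t < 0" using elim(1) by simp
      then show ?case using elim(3) by (simp add: divide_less_0_iff)
    qed
  qed
  obtain \<epsilon> where \<epsilon>: "\<epsilon> > 0" "\<forall>x\<in>M. dist x xb < \<epsilon> \<longrightarrow> f xb \<le> f x" using lmin by blast
  obtain \<delta> where \<delta>: "\<delta> > 0" "\<forall>x t. dist x xb < \<delta> \<longrightarrow> t > 0 \<longrightarrow> (\<forall>r\<in>E. c r x = t * s r) \<longrightarrow> x \<in> M"
    using feas by blast
  have close: "\<forall>\<^sub>F t in at_right 0. dist (X t) xb < min \<delta> \<epsilon>"
    using Xconv \<delta>(1) \<epsilon>(1) by (intro tendstoD) auto
  have "\<forall>\<^sub>F t in at_right (0::real). False"
    using close negev tpos Xev
  proof (eventually_elim)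
    case (elim t)
    have "X t \<in> M" using \<delta>(2) elim by auto
    then show False using \<epsilon>(2) elim by force
  qed
  then show False by (simp add: trivial_limit_at_right_real)
qed




lemma sum_E4:
  assumes "finite I" "finite J" "finite K1" "finite K2"
  shows "(\<Sum>r\<in>Inl ` I \<union> Inr ` (Inl ` J \<union> Inr ` (Inl ` K1 \<union> Inr ` K2)). \<phi> r) =
    (\<Sum>i\<in>I. \<phi> (Inl i)) + (\<Sum>j\<in>J. \<phi> (Inr (Inl j))) + (\<Sum>m\<in>K1. \<phi> (Inr (Inr (Inl m))))
    + (\<Sum>m\<in>K2. \<phi> (Inr (Inr (Inr m))))"
proof -
  have d1: "Inl ` I \<inter> Inr ` (Inl ` J \<union> Inr ` (Inl ` K1 \<union> Inr ` K2)) = {}" by auto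
  have d2: "Inl ` J \<inter> Inr ` (Inl ` K1 \<union> Inr ` K2) = {}" by auto
  have d3: "Inl ` K1 \<inter> Inr ` K2 = {}" by auto
  show ?thesis using assms
    by (simp add: sum.union_disjoint[OF _ _ d1] sum.union_disjoint[OF _ _ d2] sum.union_disjoint[OF _ _ d3]
        sum.reindex add.assoc)
qed

theorem mainTheorem6:
  fixes f :: "'a::euclidean_space \<Rightarrow> real"
    and f' :: "'a \<Rightarrow> ('a \<Rightarrow>\<^sub>L real)" and f'' :: "'a \<Rightarrow> ('a \<Rightarrow>\<^sub>L ('a \<Rightarrow>\<^sub>L real))"
    and I :: "'i set" and h :: "'i \<Rightarrow> 'a \<Rightarrow> real"
    and h' :: "'i \<Rightarrow> 'a \<Rightarrow> ('a \<Rightarrow>\<^sub>L real)" and h'' :: "'i \<Rightarrow> 'a \<Rightarrow> ('a \<Rightarrow>\<^sub>L ('a \<Rightarrow>\<^sub>L real))"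
    and J :: "'j set" and g :: "'j \<Rightarrow> 'a \<Rightarrow> real"
    and g' :: "'j \<Rightarrow> 'a \<Rightarrow> ('a \<Rightarrow>\<^sub>L real)" and g'' :: "'j \<Rightarrow> 'a \<Rightarrow> ('a \<Rightarrow>\<^sub>L ('a \<Rightarrow>\<^sub>L real))"
    and k :: nat and F1 F2 :: "nat \<Rightarrow> 'a \<Rightarrow> real"
    and F1' F2' :: "nat \<Rightarrow> 'a \<Rightarrow> ('a \<Rightarrow>\<^sub>L real)"
    and F1'' F2'' :: "nat \<Rightarrow> 'a \<Rightarrow> ('a \<Rightarrow>\<^sub>L ('a \<Rightarrow>\<^sub>L real))"
    and xb :: 'a
    and lam :: "'i \<Rightarrow> real" and mu :: "'j \<Rightarrow> real"
    and sig1 sig2 rho1 rho2 :: "nat \<Rightarrow> real"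
    and D2L :: "'a \<Rightarrow> 'a \<Rightarrow> real" and T :: "'a set"
  assumes finI: "finite I" and finJ: "finite J"
    and C2f: "C2_with f f' f''"
    and C2h: "\<forall>i\<in>I. C2_with (h i) (h' i) (h'' i)"
    and C2g: "\<forall>j\<in>J. C2_with (g j) (g' j) (g'' j)"
    and C2F1: "\<forall>m\<in>{1..k}. C2_with (F1 m) (F1' m) (F1'' m)"
    and C2F2: "\<forall>m\<in>{1..k}. C2_with (F2 m) (F2' m) (F2'' m)"
    and feas: "xb \<in> feasible_set I h J g k F1 F2"
    \<comment> \<open>T-stationarity with the multipliers\<close>
    and stat: "\<forall>\<xi>. f' xb \<xi> =
        (\<Sum>i\<in>I. lam i * h' i xb \<xi>) + (\<Sum>j\<in>J0 J g xb. mu j * g' j xb \<xi>)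
        + (\<Sum>m\<in>a01 k F1 F2 xb. sig1 m * F1' m xb \<xi>)
        + (\<Sum>m\<in>a10 k F1 F2 xb. sig2 m * F2' m xb \<xi>)
        + (\<Sum>m\<in>a00 k F1 F2 xb. rho1 m * F1' m xb \<xi> + rho2 m * F2' m xb \<xi>)"
    and mu_nonneg: "\<forall>j\<in>J0 J g xb. mu j \<ge> 0"
    and rho_sign: "\<forall>m\<in>a00 k F1 F2 xb. rho1 m = 0 \<or> rho2 m \<le> 0"
    \<comment> \<open>ND1: LICQ (linear independence of the family of differentials)\<close>
    and ND1: "\<forall>(a::'i \<Rightarrow> real) (b::'j \<Rightarrow> real) (c1::nat \<Rightarrow> real) (c2::nat \<Rightarrow> real).
        (\<forall>\<xi>. (\<Sum>i\<in>I. a i * h' i xb \<xi>) + (\<Sum>j\<in>J0 J g xb. b j * g' j xb \<xi>)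
            + (\<Sum>m\<in>a01 k F1 F2 xb \<union> a00 k F1 F2 xb. c1 m * F1' m xb \<xi>)
            + (\<Sum>m\<in>a10 k F1 F2 xb \<union> a00 k F1 F2 xb. c2 m * F2' m xb \<xi>) = 0)
        \<longrightarrow> (\<forall>i\<in>I. a i = 0) \<and> (\<forall>j\<in>J0 J g xb. b j = 0)
            \<and> (\<forall>m\<in>a01 k F1 F2 xb \<union> a00 k F1 F2 xb. c1 m = 0)
            \<and> (\<forall>m\<in>a10 k F1 F2 xb \<union> a00 k F1 F2 xb. c2 m = 0)"
    and ND2: "\<forall>j\<in>J0 J g xb. mu j > 0"
    and ND3: "\<forall>m\<in>a00 k F1 F2 xb. rho1 m \<noteq> 0 \<and> rho2 m < 0"
    \<comment> \<open>D2L is the Hessian of the Lagrange function at xb\<close>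
    and D2L_def: "\<forall>\<xi> \<eta>. D2L \<xi> \<eta> = D2 (f'' xb) \<xi> \<eta>
        - (\<Sum>i\<in>I. lam i * D2 (h'' i xb) \<xi> \<eta>)
        - (\<Sum>j\<in>J0 J g xb. mu j * D2 (g'' j xb) \<xi> \<eta>)
        - (\<Sum>m\<in>a01 k F1 F2 xb. sig1 m * D2 (F1'' m xb) \<xi> \<eta>)
        - (\<Sum>m\<in>a10 k F1 F2 xb. sig2 m * D2 (F2'' m xb) \<xi> \<eta>)
        - (\<Sum>m\<in>a00 k F1 F2 xb. rho1 m * D2 (F1'' m xb) \<xi> \<eta> + rho2 m * D2 (F2'' m xb) \<xi> \<eta>)"
    \<comment> \<open>T is the tangent space T_xb M(xb)\<close>
    and T_def: "T = {\<xi>. (\<forall>i\<in>I. h' i xb \<xi> = 0) \<and> (\<forall>j\<in>J0 J g xb. g' j xb \<xi> = 0)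
        \<and> (\<forall>m\<in>a01 k F1 F2 xb \<union> a00 k F1 F2 xb. F1' m xb \<xi> = 0)
        \<and> (\<forall>m\<in>a10 k F1 F2 xb \<union> a00 k F1 F2 xb. F2' m xb \<xi> = 0)}"
    and ND4: "restr_nonsingular D2L T"
  shows "(local_minimizer f (feasible_set I h J g k F1 F2) xb \<longleftrightarrow>
            neg_eig_count D2L T + card {m\<in>a00 k F1 F2 xb. rho2 m < 0} = 0)
       \<and> (local_minimizer f (feasible_set I h J g k F1 F2) xb \<longleftrightarrow>
            a00 k F1 F2 xb = {} \<and> (\<forall>l. restr_eigenvalue D2L T l \<longrightarrow> \<not> l < 0))"
proof -
  define A00 where "A00 = a00 k F1 F2 xb"
  define A01 where "A01 = a01 k F1 F2 xb"
  define A10 where "A10 = a10 k F1 F2 xb"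
  define J0s where "J0s = J0 J g xb"
  define M where "M = feasible_set I h J g k F1 F2"
  note defs = A00_def[symmetric] A01_def[symmetric] A10_def[symmetric] J0s_def[symmetric] M_def[symmetric]
  have finA: "finite A00" "finite A01" "finite A10" "A00 \<subseteq> {1..k}" "A01 \<subseteq> {1..k}" "A10 \<subseteq> {1..k}"
    unfolding A00_def A01_def A10_def a00_def a01_def a10_def by auto
  have finJ0: "finite J0s" "J0s \<subseteq> J" unfolding J0s_def J0_def using finJ by auto
  have disj01: "A01 \<inter> A00 = {}" "A10 \<inter> A00 = {}"
    unfolding A00_def A01_def A10_def a00_def a01_def a10_def by auto
  have xbM: "xb \<in> M" using feas unfolding M_def .
  have feasxb: "\<forall>i\<in>I. h i xb = 0" "\<forall>j\<in>J. g j xb \<ge> 0" "\<forall>m\<in>{1..k}. F1 m xb * F2 m xb = 0 \<and> F2 m xb \<ge> 0"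
    using feas unfolding feasible_set_def by auto
  define E where "E = Inl ` I \<union> Inr ` (Inl ` J0s \<union> Inr ` (Inl ` (A01 \<union> A00) \<union> Inr ` (A10 \<union> A00)))"
  define c where "c = case_sum h (case_sum g (case_sum F1 F2))"
  define c' where "c' = case_sum h' (case_sum g' (case_sum F1' F2'))"
  define c'' where "c'' = case_sum h'' (case_sum g'' (case_sum F1'' F2''))"
  define mm where "mm = case_sum lam (case_sum mu (case_sum (\<lambda>m. if m \<in> A01 then sig1 m else rho1 m)
       (\<lambda>m. if m \<in> A10 then sig2 m else rho2 m)))"
  have finE: "finite E" unfolding E_def using finI finJ0 finA by auto
  have sumE: "(\<Sum>r\<in>E. \<phi> r) = (\<Sum>i\<in>I. \<phi> (Inl i)) + (\<Sum>j\<in>J0s. \<phi> (Inr (Inl j)))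
      + (\<Sum>m\<in>A01 \<union> A00. \<phi> (Inr (Inr (Inl m)))) + (\<Sum>m\<in>A10 \<union> A00. \<phi> (Inr (Inr (Inr m))))" for \<phi>
    unfolding E_def by (rule sum_E4) (use finI finJ0 finA in auto)
  have ballE: "(\<forall>r\<in>E. P r) \<longleftrightarrow> (\<forall>i\<in>I. P (Inl i)) \<and> (\<forall>j\<in>J0s. P (Inr (Inl j)))
      \<and> (\<forall>m\<in>A01 \<union> A00. P (Inr (Inr (Inl m)))) \<and> (\<forall>m\<in>A10 \<union> A00. P (Inr (Inr (Inr m))))" for P
    unfolding E_def by blast
  have C2c: "\<forall>r\<in>E. C2_with (c r) (c' r) (c'' r)"
    unfolding ballE c_def c'_def c''_def using C2h C2g C2F1 C2F2 finJ0(2) finA by auto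
  have c0: "\<forall>r\<in>E. c r xb = 0"
    unfolding ballE c_def using feasxb(1)
    unfolding J0s_def J0_def A00_def A01_def A10_def a00_def a01_def a10_def by auto
  have licq: "\<forall>a. (\<forall>\<zeta>. (\<Sum>r\<in>E. a r * c' r xb \<zeta>) = 0) \<longrightarrow> (\<forall>r\<in>E. a r = 0)"
  proof (intro allI impI)
    fix a :: "'i + 'j + nat + nat \<Rightarrow> real"
    assume H: "\<forall>\<zeta>. (\<Sum>r\<in>E. a r * c' r xb \<zeta>) = 0"
    have H': "\<forall>\<zeta>. (\<Sum>i\<in>I. a (Inl i) * h' i xb \<zeta>) + (\<Sum>j\<in>J0 J g xb. a (Inr (Inl j)) * g' j xb \<zeta>)
            + (\<Sum>m\<in>a01 k F1 F2 xb \<union> a00 k F1 F2 xb. a (Inr (Inr (Inl m))) * F1' m xb \<zeta>)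
            + (\<Sum>m\<in>a10 k F1 F2 xb \<union> a00 k F1 F2 xb. a (Inr (Inr (Inr m))) * F2' m xb \<zeta>) = 0"
    proof
      fix \<zeta>
      have "(\<Sum>r\<in>E. a r * c' r xb \<zeta>) = 0" using H by blast
      then show "(\<Sum>i\<in>I. a (Inl i) * h' i xb \<zeta>) + (\<Sum>j\<in>J0 J g xb. a (Inr (Inl j)) * g' j xb \<zeta>)
            + (\<Sum>m\<in>a01 k F1 F2 xb \<union> a00 k F1 F2 xb. a (Inr (Inr (Inl m))) * F1' m xb \<zeta>)
            + (\<Sum>m\<in>a10 k F1 F2 xb \<union> a00 k F1 F2 xb. a (Inr (Inr (Inr m))) * F2' m xb \<zeta>) = 0"
        unfolding sumE c'_def J0s_def A01_def A00_def A10_def by simp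
    qed
    have "(\<forall>i\<in>I. a (Inl i) = 0) \<and> (\<forall>j\<in>J0 J g xb. a (Inr (Inl j)) = 0)
            \<and> (\<forall>m\<in>a01 k F1 F2 xb \<union> a00 k F1 F2 xb. a (Inr (Inr (Inl m))) = 0)
            \<and> (\<forall>m\<in>a10 k F1 F2 xb \<union> a00 k F1 F2 xb. a (Inr (Inr (Inr m))) = 0)"
      by (rule mp[OF ND1[THEN spec[where x="\<lambda>i. a (Inl i)"], THEN spec[where x="\<lambda>j. a (Inr (Inl j))"],
          THEN spec[where x="\<lambda>m. a (Inr (Inr (Inl m)))"], THEN spec[where x="\<lambda>m. a (Inr (Inr (Inr m)))"]] H'])
    then show "\<forall>r\<in>E. a r = 0" unfolding ballE defs by simp
  qed
  have stat': "\<forall>\<xi>. f' xb \<xi> = (\<Sum>r\<in>E. mm r * c' r xb \<xi>)"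
  proof
    fix \<xi>
    have s1: "(\<Sum>m\<in>A01 \<union> A00. (if m \<in> A01 then sig1 m else rho1 m) * F1' m xb \<xi>)
        = (\<Sum>m\<in>A01. sig1 m * F1' m xb \<xi>) + (\<Sum>m\<in>A00. rho1 m * F1' m xb \<xi>)"
      using finA disj01 by (simp add: sum.union_disjoint) (intro arg_cong2[where f="(+)"] sum.cong; auto)
    have s2: "(\<Sum>m\<in>A10 \<union> A00. (if m \<in> A10 then sig2 m else rho2 m) * F2' m xb \<xi>)
        = (\<Sum>m\<in>A10. sig2 m * F2' m xb \<xi>) + (\<Sum>m\<in>A00. rho2 m * F2' m xb \<xi>)"
      using finA disj01 by (simp add: sum.union_disjoint) (intro arg_cong2[where f="(+)"] sum.cong; auto)
    show "f' xb \<xi> = (\<Sum>r\<in>E. mm r * c' r xb \<xi>)"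
      unfolding sumE mm_def c'_def using stat[rule_format, of \<xi>] s1 s2
      by (simp add: defs sum.distrib)
  qed
  define AA where "AA = f'' xb - (\<Sum>r\<in>E. mm r *\<^sub>R c'' r xb)"
  have D2Leq: "D2L \<xi> \<eta> = D2 AA \<xi> \<eta>" for \<xi> \<eta>
  proof -
    have s1: "(\<Sum>m\<in>A01 \<union> A00. (if m \<in> A01 then sig1 m else rho1 m) * D2 (F1'' m xb) \<xi> \<eta>)
        = (\<Sum>m\<in>A01. sig1 m * D2 (F1'' m xb) \<xi> \<eta>) + (\<Sum>m\<in>A00. rho1 m * D2 (F1'' m xb) \<xi> \<eta>)"
      using finA disj01 by (simp add: sum.union_disjoint) (intro arg_cong2[where f="(+)"] sum.cong; auto)
    have s2: "(\<Sum>m\<in>A10 \<union> A00. (if m \<in> A10 then sig2 m else rho2 m) * D2 (F2'' m xb) \<xi> \<eta>)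
        = (\<Sum>m\<in>A10. sig2 m * D2 (F2'' m xb) \<xi> \<eta>) + (\<Sum>m\<in>A00. rho2 m * D2 (F2'' m xb) \<xi> \<eta>)"
      using finA disj01 by (simp add: sum.union_disjoint) (intro arg_cong2[where f="(+)"] sum.cong; auto)
    have "D2 AA \<xi> \<eta> = D2 (f'' xb) \<xi> \<eta> - (\<Sum>r\<in>E. mm r * D2 (c'' r xb) \<xi> \<eta>)"
      unfolding AA_def by (simp add: D2_diff D2_Asum D2_Ascale)
    then show ?thesis
      unfolding sumE mm_def c''_def using D2L_def[rule_format, of \<xi> \<eta>] s1 s2
      by (simp add: defs sum.distrib)
  qed
  have D2Lfun: "D2L = D2 AA" using D2Leq by (intro ext) simp
  have symAA: "D2 AA u v = D2 AA v u" for u v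
  proof -
    have "(\<Sum>r\<in>E. mm r * D2 (c'' r xb) u v) = (\<Sum>r\<in>E. mm r * D2 (c'' r xb) v u)"
    proof (rule sum.cong)
      fix r assume "r \<in> E"
      then show "mm r * D2 (c'' r xb) u v = mm r * D2 (c'' r xb) v u"
        using D2_sym[of "c r" "c' r" "c'' r" xb u v] C2c by simp
    qed simp
    moreover have "D2 AA w z = D2 (f'' xb) w z - (\<Sum>r\<in>E. mm r * D2 (c'' r xb) w z)" for w z
      unfolding AA_def by (simp add: D2_diff D2_Asum D2_Ascale)
    ultimately show ?thesis using D2_sym[OF C2f] by simp
  qed
  have Teq: "T = {\<xi>. \<forall>r\<in>E. c' r xb \<xi> = 0}"
    unfolding T_def ballE c'_def defs by simp
  have subT: "subspace T"
    unfolding Teq subspace_def by (auto simp: blinfun.add_right blinfun.scaleR_right)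
  have card0: "card {m\<in>A00. rho2 m < 0} = 0 \<longleftrightarrow> A00 = {}"
    using ND3 finA(1) unfolding defs by auto
  have eq1: "(neg_eig_count D2L T + card {m\<in>A00. rho2 m < 0} = 0) \<longleftrightarrow>
      (A00 = {} \<and> (\<forall>l. restr_eigenvalue D2L T l \<longrightarrow> \<not> l < 0))"
    using neg_eig_count_zero[of D2L T] symAA card0 unfolding D2Lfun by auto
  have contfun: "continuous_on UNIV \<phi>" if "C2_with \<phi> \<phi>' \<phi>''" for \<phi> :: "'a \<Rightarrow> real" and \<phi>' \<phi>''
    using C2D(1)[OF that] by (meson continuous_at_imp_continuous_on has_derivative_continuous)
  have evpos: "\<forall>\<^sub>F x in nhds xb. \<phi> x > 0" if "C2_with \<phi> \<phi>' \<phi>''" "\<phi> xb > 0" for \<phi> :: "'a \<Rightarrow> real" and \<phi>' \<phi>''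
  proof -
    have "open {x. 0 < \<phi> x}" by (rule open_Collect_less[OF continuous_on_const contfun[OF that(1)]])
    then show ?thesis using eventually_nhds_in_open[of "{x. 0 < \<phi> x}" xb] that(2) by simp
  qed
  have evne: "\<forall>\<^sub>F x in nhds xb. \<phi> x \<noteq> 0" if "C2_with \<phi> \<phi>' \<phi>''" "\<phi> xb \<noteq> 0" for \<phi> :: "'a \<Rightarrow> real" and \<phi>' \<phi>''
  proof -
    have "open {x. \<phi> x \<noteq> 0}" by (rule open_Collect_neq[OF contfun[OF that(1)] continuous_on_const])
    then show ?thesis using eventually_nhds_in_open[of "{x. \<phi> x \<noteq> 0}" xb] that(2) by simp
  qed
  have finJJ: "finite (J - J0s)" using finJ by simp
  have openpos: "\<forall>\<^sub>F x in nhds xb. (\<forall>j\<in>J - J0s. g j x > 0) \<and> (\<forall>m\<in>A01. F2 m x > 0) \<and> (\<forall>m\<in>A10. F1 m x \<noteq> 0)"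
  proof -
    have "\<forall>\<^sub>F x in nhds xb. \<forall>j\<in>J - J0s. g j x > 0"
    proof (rule eventually_ball_finite[OF finJJ], rule ballI)
      fix j assume j: "j \<in> J - J0s"
      then have "g j xb > 0" using feasxb(2) unfolding J0s_def J0_def by force
      then show "\<forall>\<^sub>F x in nhds xb. g j x > 0" using evpos C2g j by blast
    qed
    moreover have "\<forall>\<^sub>F x in nhds xb. \<forall>m\<in>A01. F2 m x > 0"
    proof (rule eventually_ball_finite[OF finA(2)], rule ballI)
      fix m assume m: "m \<in> A01"
      then have "F2 m xb > 0" "m \<in> {1..k}" unfolding A01_def a01_def by auto
      then show "\<forall>\<^sub>F x in nhds xb. F2 m x > 0" using evpos C2F2 by blast
    qed
    moreover have "\<forall>\<^sub>F x in nhds xb. \<forall>m\<in>A10. F1 m x \<noteq> 0"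
    proof (rule eventually_ball_finite[OF finA(3)], rule ballI)
      fix m assume m: "m \<in> A10"
      then have "F1 m xb \<noteq> 0" "m \<in> {1..k}" unfolding A10_def a10_def by auto
      then show "\<forall>\<^sub>F x in nhds xb. F1 m x \<noteq> 0" using evne C2F1 by blast
    qed
    ultimately show ?thesis by (simp add: eventually_conj_iff)
  qed
  obtain \<delta>0 where \<delta>0: "\<delta>0 > 0" "\<And>x. dist x xb < \<delta>0 \<Longrightarrow>
      (\<forall>j\<in>J - J0s. g j x > 0) \<and> (\<forall>m\<in>A01. F2 m x > 0) \<and> (\<forall>m\<in>A10. F1 m x \<noteq> 0)"
    using openpos unfolding eventually_nhds_metric by blast
  have classify: "m \<in> A01 \<or> m \<in> A00 \<or> m \<in> A10" if "m \<in> {1..k}" for m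
    using feasxb(3) that unfolding A01_def A00_def A10_def a01_def a00_def a10_def by force
  have Mdef: "x \<in> M \<longleftrightarrow> (\<forall>i\<in>I. h i x = 0) \<and> (\<forall>j\<in>J. g j x \<ge> 0) \<and>
         (\<forall>m\<in>{1..k}. F1 m x * F2 m x = 0 \<and> F2 m x \<ge> 0)" for x
    unfolding M_def feasible_set_def by simp
  have main: "local_minimizer f M xb \<longleftrightarrow> (A00 = {} \<and> (\<forall>l. restr_eigenvalue D2L T l \<longrightarrow> \<not> l < 0))"
  proof
    assume lm: "local_minimizer f M xb"
    then have lmin: "\<exists>\<epsilon>>0. \<forall>x\<in>M. dist x xb < \<epsilon> \<longrightarrow> f xb \<le> f x" unfolding local_minimizer_def by blast
    have feasgen: "\<exists>\<delta>>0. \<forall>x t. dist x xb < \<delta> \<longrightarrow> t > 0 \<longrightarrow> (\<forall>r\<in>E. c r x = t * s r) \<longrightarrow> x \<in> M"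
      if s1: "\<forall>i\<in>I. s (Inl i) = 0" "\<forall>j\<in>J0s. s (Inr (Inl j)) = 0" "\<forall>m\<in>A01\<union>A00. s (Inr (Inr (Inl m))) = 0"
        "\<forall>m\<in>A10. s (Inr (Inr (Inr m))) = 0" "\<forall>m\<in>A00. s (Inr (Inr (Inr m))) \<ge> 0"
      for s :: "'i + 'j + nat + nat \<Rightarrow> real"
    proof (intro exI[of _ \<delta>0] conjI allI impI)
      show "\<delta>0 > 0" by (rule \<delta>0(1))
      fix x t assume x: "dist x xb < \<delta>0" and t: "t > 0" and cx: "\<forall>r\<in>E. c r x = t * s r"
      have cx': "\<forall>i\<in>I. h i x = t * s (Inl i)" "\<forall>j\<in>J0s. g j x = t * s (Inr (Inl j))"
        "\<forall>m\<in>A01 \<union> A00. F1 m x = t * s (Inr (Inr (Inl m)))" "\<forall>m\<in>A10 \<union> A00. F2 m x = t * s (Inr (Inr (Inr m)))"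
        using cx unfolding ballE c_def by auto
      have P1: "\<forall>i\<in>I. h i x = 0" using cx' s1 by simp
      have P2: "\<forall>j\<in>J. g j x \<ge> 0"
      proof
        fix j assume j: "j \<in> J"
        show "g j x \<ge> 0"
        proof (cases "j \<in> J0s")
          case True then show ?thesis using cx' s1 by simp
        next
          case False
          then have "g j x > 0" using \<delta>0(2)[OF x] j by blast
          then show ?thesis by simp
        qed
      qed
      have P3: "\<forall>m\<in>{1..k}. F1 m x * F2 m x = 0 \<and> F2 m x \<ge> 0"
      proof
        fix m assume m: "m \<in> {1..k}"
        from classify[OF m] show "F1 m x * F2 m x = 0 \<and> F2 m x \<ge> 0"
        proof (elim disjE)
          assume "m \<in> A01" then show ?thesis using cx' s1 \<delta>0(2)[OF x] by (simp add: less_imp_le)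
        next
          assume "m \<in> A00" then show ?thesis using cx' s1 t by simp
        next
          assume "m \<in> A10" then show ?thesis using cx' s1 by simp
        qed
      qed
      show "x \<in> M" unfolding Mdef using P1 P2 P3 by blast
    qed
    show "A00 = {} \<and> (\<forall>l. restr_eigenvalue D2L T l \<longrightarrow> \<not> l < 0)"
    proof (intro conjI allI impI notI)
      show "A00 = {}"
      proof (rule ccontr)
        assume "A00 \<noteq> {}"
        then obtain m0 where m0: "m0 \<in> A00" by blast
        define r0 where "r0 = (Inr (Inr (Inr m0)) :: 'i + 'j + nat + nat)"
        define s where "s r = (if r = r0 then 1 else 0 :: real)" for r
        have r0E: "r0 \<in> E" unfolding E_def r0_def using m0 by blast
        have m0A10: "m0 \<notin> A10" using m0 disj01 by blast
        have "(\<Sum>r\<in>E. mm r * s r) = (\<Sum>r\<in>E. if r = r0 then mm r else 0)"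
          unfolding s_def by (rule sum.cong) auto
        also have "\<dots> = mm r0" using finE r0E by (simp add: sum.delta')
        also have "\<dots> = rho2 m0" unfolding r0_def mm_def using m0A10 by simp
        finally have hyp: "(\<Sum>r\<in>E. mm r * s r) < 0" using ND3 m0 unfolding defs by simp
        have fs: "\<exists>\<delta>>0. \<forall>x t. dist x xb < \<delta> \<longrightarrow> t > 0 \<longrightarrow> (\<forall>r\<in>E. c r x = t * s r) \<longrightarrow> x \<in> M"
          by (rule feasgen) (auto simp: s_def r0_def m0A10)
        show False
          by (rule nec_core[OF finE C2f C2c c0 licq stat', where \<xi>=0 and s=s and M=M])
            (use hyp fs lmin in \<open>auto simp: blinfun.zero_right\<close>)
      qed
    next
      fix l assume ev: "restr_eigenvalue D2L T l" and lneg: "l < 0"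
      then obtain \<xi> where \<xi>: "\<xi> \<in> restr_eigenspace D2L T l" "\<xi> \<noteq> 0" unfolding restr_eigenvalue_def by blast
      have \<xi>T: "\<xi> \<in> T" and \<xi>ev: "D2L \<xi> \<xi> = l * (\<xi> \<bullet> \<xi>)" using \<xi>(1) unfolding restr_eigenspace_def by auto
      have "\<xi> \<bullet> \<xi> > 0" using \<xi>(2) by simp
      then have neg: "D2 AA \<xi> \<xi> < 0" using \<xi>ev lneg D2Leq by (simp add: mult_neg_pos)
      have xiT: "\<forall>r\<in>E. c' r xb \<xi> = 0" using \<xi>T unfolding Teq by simp
      have fs: "\<exists>\<delta>>0. \<forall>x t. dist x xb < \<delta> \<longrightarrow> t > 0 \<longrightarrow> (\<forall>r\<in>E. c r x = t * (\<lambda>_. 0) r) \<longrightarrow> x \<in> M"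
        by (rule feasgen) auto
      show False
        by (rule nec_core[OF finE C2f C2c c0 licq stat' xiT, where s="\<lambda>_. 0" and M=M])
          (use neg fs lmin in \<open>auto simp: AA_def\<close>)
    qed
  next
    assume H: "A00 = {} \<and> (\<forall>l. restr_eigenvalue D2L T l \<longrightarrow> \<not> l < 0)"
    define G where "G = (Inr ` Inl ` J0s :: ('i + 'j + nat + nat) set)"
    have GE: "G \<subseteq> E" unfolding G_def E_def by blast
    have mpos: "\<forall>r\<in>G. mm r > 0" unfolding G_def mm_def using ND2 unfolding defs by auto
    have pd: "\<forall>\<xi>. (\<forall>r\<in>E. c' r xb \<xi> = 0) \<longrightarrow> \<xi> \<noteq> 0 \<longrightarrow> D2 (f'' xb - (\<Sum>r\<in>E. mm r *\<^sub>R c'' r xb)) \<xi> \<xi> > 0"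
    proof (intro allI impI)
      fix \<xi> assume xiT: "\<forall>r\<in>E. c' r xb \<xi> = 0" and xi0: "\<xi> \<noteq> 0"
      show "D2 (f'' xb - (\<Sum>r\<in>E. mm r *\<^sub>R c'' r xb)) \<xi> \<xi> > 0"
      proof (rule ccontr)
        assume "\<not> ?thesis"
        then have le: "D2 AA \<xi> \<xi> \<le> 0" unfolding AA_def by simp
        have "\<xi> \<in> T" unfolding Teq using xiT by simp
        then obtain l where l: "l \<le> 0" "restr_eigenvalue (D2 AA) T l"
          using neg_dir_eigen[OF symAA subT _ xi0 le] by blast
        have l0: "l = 0" using H l unfolding D2Lfun by force
        then obtain \<zeta> where "\<zeta> \<in> restr_eigenspace (D2 AA) T 0" "\<zeta> \<noteq> 0"
          using l(2) unfolding restr_eigenvalue_def by blast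
        then show False using ND4 unfolding restr_nonsingular_def restr_eigenspace_def D2Lfun by auto
      qed
    qed
    have fs: "\<exists>\<delta>>0. \<forall>x\<in>M. dist x xb < \<delta> \<longrightarrow> (\<forall>r\<in>E-G. c r x = 0) \<and> (\<forall>r\<in>G. c r x \<ge> 0)"
    proof (rule exI[of _ \<delta>0], rule conjI[OF \<delta>0(1)], intro ballI impI)
      fix x assume xM: "x \<in> M" and x: "dist x xb < \<delta>0"
      have Mx: "\<forall>i\<in>I. h i x = 0" "\<forall>j\<in>J. g j x \<ge> 0" "\<forall>m\<in>{1..k}. F1 m x * F2 m x = 0 \<and> F2 m x \<ge> 0"
        using xM unfolding Mdef by auto
      have GG: "\<forall>r\<in>G. c r x \<ge> 0" unfolding G_def c_def using Mx(2) finJ0(2) by auto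
      have A: "\<forall>m\<in>A01. F1 m x = 0" using \<delta>0(2)[OF x] Mx(3) finA(5) by fastforce
      have B: "\<forall>m\<in>A10. F2 m x = 0" using \<delta>0(2)[OF x] Mx(3) finA(6) by fastforce
      have "\<forall>r\<in>E-G. c r x = 0"
      proof
        fix r assume r: "r \<in> E - G"
        then consider (i) i where "i \<in> I" "r = Inl i" | (m1) m where "m \<in> A01" "r = Inr (Inr (Inl m))"
          | (m2) m where "m \<in> A10" "r = Inr (Inr (Inr m))"
          unfolding E_def G_def using H by blast
        then show "c r x = 0"
          by cases (use Mx A B in \<open>auto simp: c_def\<close>)
      qed
      then show "(\<forall>r\<in>E-G. c r x = 0) \<and> (\<forall>r\<in>G. c r x \<ge> 0)" using GG by blast
    qed
    obtain \<epsilon> where "\<epsilon> > 0" "\<forall>x\<in>M. dist x xb < \<epsilon> \<longrightarrow> f xb \<le> f x"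
      using suff_core[OF finE GE C2f C2c c0 stat' mpos pd fs] by blast
    then show "local_minimizer f M xb" unfolding local_minimizer_def using xbM by blast
  qed
  show ?thesis unfolding defs using main eq1 by simp
qed


end
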